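(* Let $(P,w)$ be a naturally labeled poset with $n$ elements. Then $$K_P(\mathbf x)=\sum_{\alpha\vDash n}\frac{\Psi_\alpha(\mathbf x)}{z_\alpha}\,|\mathcal L^*_\alpha(P,w)|.$$ In particular $K_P$ is $\Psi$-positive, i.e. has nonnegative coefficients in the basis $\{\Psi_\alpha\}$.
   Context: Compositions: $\alpha=(\alpha_1,\dots,\alpha_\ell)\vDash n$, $S_\alpha=\{\alpha_1,\dots,\alpha_1+\dots+\alpha_{\ell-1}\}$, blocks $B_i(\alpha)=\{\alpha_1+\dots+\alpha_{i-1}+1,\dots,\alpha_1+\dots+\alpha_i\}$, $\alpha\le\beta$ iff $S_\beta\subseteq S_\alpha$. $K_P(\mathbf x)=\sum_f\prod_{x\in P}x_{f(x)}$ over all maps $f:P\to\mathbb Z_{>0}$ with $x<_Py\Rightarrow f(x)\le f(y)$. $M_\alpha=\sum_{i_1<\dots<i_\ell}x_{i_1}^{\alpha_1}\cdots x_{i_\ell}^{\alpha_\ell}$; $z_\alpha=\prod_i i^{m_i}m_i!$ ($m_i$ = number of parts equal to $i$); $\pi(\gamma)=\prod_{i}(\gamma_1+\dots+\gamma_i)$; for $\alpha\le\beta$, $\pi(\alpha,\beta)=\prod_{i=1}^{\ell(\beta)}\pi(\alpha^{(i)})$ with $\alpha^{(i)}$ the parts $\alpha_j$ with $B_j(\alpha)\subseteq B_i(\beta)$; $\Psi_\alpha=z_\alpha\sum_{\beta\ge\alpha}\pi(\alpha,\beta)^{-1}M_\beta$. A labeled poset $(P,w)$ is a finite poset with a bijection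 $w:P\to[n]$, naturally labeled if $x<_Py\Rightarrow w(x)<w(y)$. $\mathcal L(P,w)=\{\sigma\in\mathfrak S_n:\sigma^{-1}(w(x))<\sigma^{-1}(w(y))\text{ whenever }x<_Py\}$. $\sigma\in\mathfrak S_n$ is $\alpha$-unimodal if on each block $[a,b]=B_i(\alpha)$ one has $\sigma_a>\dots>\sigma_k<\dots<\sigma_b$ for some $k$. $P_i^\alpha(\sigma)=\{w^{-1}(\sigma_j):j\in B_i(\alpha)\}$ with induced order. $\mathcal L^*_\alpha(P,w)$ is the set of $\alpha$-unimodal $\sigma\in\mathcal L(P,w)$ such that each $P_i^\alpha(\sigma)$ has a unique minimal element. *)

theory Defs
  imports Complex_Main "HOL-Library.FuncSet" "HOL-Combinatorics.Permutations"
begin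

definition composition :: "nat \<Rightarrow> nat list \<Rightarrow> bool" where
  "composition n \<alpha> \<longleftrightarrow> sum_list \<alpha> = n \<and> (\<forall>a\<in>set \<alpha>. 0 < a)"

definition compositions :: "nat \<Rightarrow> nat list set" where
  "compositions n = {\<alpha>. composition n \<alpha>}"

definition Sset :: "nat list \<Rightarrow> nat set" where
  "Sset \<alpha> = {sum_list (take i \<alpha>) | i. 1 \<le> i \<and> i < length \<alpha>}"

text \<open>Block B_i(alpha), 1-based index i.\<close>
definition block :: "nat list \<Rightarrow> nat \<Rightarrow> nat set" where
  "block \<alpha> i = {sum_list (take (i - 1) \<alpha>) + 1 .. sum_list (take i \<alpha>)}"

definition zcoef :: "nat list \<Rightarrow> nat" where
  "zcoef \<alpha> = (\<Prod>i\<in>set \<alpha>. i ^ count_list \<alpha> i * fact (count_list \<alpha> i))"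

definition pi1 :: "nat list \<Rightarrow> nat" where
  "pi1 \<gamma> = (\<Prod>i = 1..length \<gamma>. sum_list (take i \<gamma>))"

definition subcomp :: "nat list \<Rightarrow> nat list \<Rightarrow> nat \<Rightarrow> nat list" where
  "subcomp \<alpha> \<beta> i = map (\<lambda>j. \<alpha> ! (j - 1))
      (filter (\<lambda>j. block \<alpha> j \<subseteq> block \<beta> i) [1..<length \<alpha> + 1])"

definition pi2 :: "nat list \<Rightarrow> nat list \<Rightarrow> nat" where
  "pi2 \<alpha> \<beta> = (\<Prod>i = 1..length \<beta>. pi1 (subcomp \<alpha> \<beta> i))"

text \<open>Monomial quasisymmetric function M_beta evaluated with x_i = 0 for i > N.\<close>
definition Mq :: "nat \<Rightarrow> nat list \<Rightarrow> (nat \<Rightarrow> real) \<Rightarrow> real" where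
  "Mq N \<beta> x = (\<Sum>is \<in> {is. length is = length \<beta> \<and> sorted_wrt (<) is \<and> set is \<subseteq> {1..N}}.
       \<Prod>j<length \<beta>. x (is ! j) ^ (\<beta> ! j))"

definition Psi :: "nat \<Rightarrow> nat list \<Rightarrow> (nat \<Rightarrow> real) \<Rightarrow> real" where
  "Psi N \<alpha> x = real (zcoef \<alpha>) *
     (\<Sum>\<beta> \<in> {\<beta>. composition (sum_list \<alpha>) \<beta> \<and> Sset \<beta> \<subseteq> Sset \<alpha>}.
        Mq N \<beta> x / real (pi2 \<alpha> \<beta>))"

definition is_poset :: "'a set \<Rightarrow> ('a \<Rightarrow> 'a \<Rightarrow> bool) \<Rightarrow> bool" where
  "is_poset P le \<longleftrightarrow> finite P \<and>
     (\<forall>x\<in>P. le x x) \<and>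
     (\<forall>x\<in>P. \<forall>y\<in>P. le x y \<and> le y x \<longrightarrow> x = y) \<and>
     (\<forall>x\<in>P. \<forall>y\<in>P. \<forall>z\<in>P. le x y \<and> le y z \<longrightarrow> le x z)"

definition plt :: "('a \<Rightarrow> 'a \<Rightarrow> bool) \<Rightarrow> 'a \<Rightarrow> 'a \<Rightarrow> bool" where
  "plt le x y \<longleftrightarrow> le x y \<and> x \<noteq> y"

text \<open>K_P truncated to variables x_1..x_N: sum over order-preserving f : P -> {1..N}.\<close>
definition KP :: "'a set \<Rightarrow> ('a \<Rightarrow> 'a \<Rightarrow> bool) \<Rightarrow> nat \<Rightarrow> (nat \<Rightarrow> real) \<Rightarrow> real" where
  "KP P le N x = (\<Sum>f \<in> {f \<in> P \<rightarrow>\<^sub>E {1..N}. \<forall>p\<in>P. \<forall>q\<in>P. plt le p q \<longrightarrow> f p \<le> f q}.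
       \<Prod>p\<in>P. x (f p))"

definition naturally_labeled :: "'a set \<Rightarrow> ('a \<Rightarrow> 'a \<Rightarrow> bool) \<Rightarrow> ('a \<Rightarrow> nat) \<Rightarrow> bool" where
  "naturally_labeled P le w \<longleftrightarrow> (\<forall>x\<in>P. \<forall>y\<in>P. plt le x y \<longrightarrow> w x < w y)"

definition linext :: "'a set \<Rightarrow> ('a \<Rightarrow> 'a \<Rightarrow> bool) \<Rightarrow> ('a \<Rightarrow> nat) \<Rightarrow> nat \<Rightarrow> (nat \<Rightarrow> nat) set" where
  "linext P le w n = {\<sigma>. \<sigma> permutes {1..n} \<and>
      (\<forall>x\<in>P. \<forall>y\<in>P. plt le x y \<longrightarrow> inv \<sigma> (w x) < inv \<sigma> (w y))}"

definition unimodal_on :: "(nat \<Rightarrow> nat) \<Rightarrow> nat set \<Rightarrow> bool" where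
  "unimodal_on \<sigma> B \<longleftrightarrow> (\<exists>k\<in>B.
      (\<forall>j. j \<in> B \<and> j < k \<longrightarrow> \<sigma> j > \<sigma> (Suc j)) \<and>
      (\<forall>j. j \<in> B \<and> Suc j \<in> B \<and> k \<le> j \<longrightarrow> \<sigma> j < \<sigma> (Suc j)))"

definition alpha_unimodal :: "nat list \<Rightarrow> (nat \<Rightarrow> nat) \<Rightarrow> bool" where
  "alpha_unimodal \<alpha> \<sigma> \<longleftrightarrow> (\<forall>i\<in>{1..length \<alpha>}. unimodal_on \<sigma> (block \<alpha> i))"

definition Pblock :: "'a set \<Rightarrow> ('a \<Rightarrow> nat) \<Rightarrow> nat list \<Rightarrow> (nat \<Rightarrow> nat) \<Rightarrow> nat \<Rightarrow> 'a set" where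
  "Pblock P w \<alpha> \<sigma> i = {p \<in> P. w p \<in> \<sigma> ` block \<alpha> i}"

definition unique_minimal :: "('a \<Rightarrow> 'a \<Rightarrow> bool) \<Rightarrow> 'a set \<Rightarrow> bool" where
  "unique_minimal le Q \<longleftrightarrow> (\<exists>!m. m \<in> Q \<and> \<not> (\<exists>q\<in>Q. plt le q m))"

definition Lstar :: "'a set \<Rightarrow> ('a \<Rightarrow> 'a \<Rightarrow> bool) \<Rightarrow> ('a \<Rightarrow> nat) \<Rightarrow> nat \<Rightarrow> nat list \<Rightarrow> (nat \<Rightarrow> nat) set" where
  "Lstar P le w n \<alpha> = {\<sigma> \<in> linext P le w n. alpha_unimodal \<alpha> \<sigma> \<and>
      (\<forall>i\<in>{1..length \<alpha>}. unique_minimal le (Pblock P w \<alpha> \<sigma> i))}"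

end

theory Submission
  imports Defs
begin


definition Iset :: "nat \<Rightarrow> nat \<Rightarrow> nat list set" where
  "Iset N l = {ks. length ks = l \<and> sorted_wrt (<) ks \<and> set ks \<subseteq> {1..N}}"

lemma Mq_alt: "Mq N \<beta> x = (\<Sum>ks \<in> Iset N (length \<beta>). \<Prod>j<length \<beta>. x (ks ! j) ^ (\<beta> ! j))"
  unfolding Mq_def Iset_def by simp

lemma finite_Iset: "finite (Iset N l)"
proof -
  have "Iset N l \<subseteq> {xs. set xs \<subseteq> {1..N} \<and> length xs \<le> l}" unfolding Iset_def by auto
  moreover have "finite {xs. set xs \<subseteq> {1..N} \<and> length xs \<le> l}"
    by (rule finite_lists_length_le) simp
  ultimately show ?thesis by (rule finite_subset)
qed

lemma Iset_0: "Iset 0 l = (if l = 0 then {[]} else {})"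
  unfolding Iset_def by auto

lemma Iset_l0: "Iset N 0 = {[]}" unfolding Iset_def by auto

lemma Mq_0: "Mq 0 \<beta> x = (if \<beta> = [] then 1 else 0)"
  unfolding Mq_alt Iset_0 by auto

lemma Iset_Suc: "Iset (Suc N) (Suc l) = Iset N (Suc l) \<union> (\<lambda>ks. ks @ [Suc N]) ` Iset N l"
proof (intro equalityI subsetI)
  fix ks assume a: "ks \<in> Iset (Suc N) (Suc l)"
  show "ks \<in> Iset N (Suc l) \<union> (\<lambda>ks. ks @ [Suc N]) ` Iset N l"
  proof (cases "Suc N \<in> set ks")
    case False
    then show ?thesis using a unfolding Iset_def by (auto simp: le_Suc_eq)
  next
    case True
    from a have "ks \<noteq> []" unfolding Iset_def by auto
    then obtain ys y where isd: "ks = ys @ [y]" by (metis rev_exhaust)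
    have s: "sorted_wrt (<) (ys @ [y])" and st: "set (ys@[y]) \<subseteq> {1..Suc N}" and l: "length ys = l"
      using a isd unfolding Iset_def by auto
    have lt: "\<forall>z\<in>set ys. z < y" using s by (simp add: sorted_wrt_append)
    have "y = Suc N"
    proof (rule ccontr)
      assume "y \<noteq> Suc N"
      then have "Suc N \<in> set ys" using True isd by auto
      then have "Suc N < y" using lt by auto
      then show False using st by auto
    qed
    moreover have "ys \<in> Iset N l" unfolding Iset_def using s st l lt \<open>y = Suc N\<close>
      by (auto simp: sorted_wrt_append less_Suc_eq_le)
    ultimately show ?thesis using isd by auto
  qed
next
  fix ks assume "ks \<in> Iset N (Suc l) \<union> (\<lambda>ks. ks @ [Suc N]) ` Iset N l"
  then show "ks \<in> Iset (Suc N) (Suc l)" unfolding Iset_def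
    by (auto simp: sorted_wrt_append less_Suc_eq_le subset_iff)
qed

lemma Mq_Suc: "Mq (Suc N) \<beta> x = Mq N \<beta> x +
   (if \<beta> = [] then 0 else x (Suc N) ^ last \<beta> * Mq N (butlast \<beta>) x)"
proof (cases \<beta> rule: rev_exhaust)
  case Nil
  then show ?thesis unfolding Mq_alt by (simp add: Iset_l0)
next
  case (snoc bs k)
  let ?f = "\<lambda>ks. \<Prod>j<Suc (length bs). x (ks ! j) ^ ((bs@[k]) ! j)"
  have disj: "Iset N (Suc (length bs)) \<inter> (\<lambda>ks. ks @ [Suc N]) ` Iset N (length bs) = {}"
    unfolding Iset_def by auto
  have inj: "inj_on (\<lambda>ks. ks @ [Suc N]) (Iset N (length bs))" by (auto simp: inj_on_def)
  have "Mq (Suc N) \<beta> x = sum ?f (Iset N (Suc (length bs))) + sum ?f ((\<lambda>ks. ks @ [Suc N]) ` Iset N (length bs))"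
    unfolding Mq_alt snoc by (simp add: Iset_Suc sum.union_disjoint finite_Iset disj)
  also have "sum ?f (Iset N (Suc (length bs))) = Mq N \<beta> x" unfolding Mq_alt snoc by simp
  also have "sum ?f ((\<lambda>ks. ks @ [Suc N]) ` Iset N (length bs)) =
      (\<Sum>ks\<in>Iset N (length bs). ?f (ks @ [Suc N]))"
    by (rule sum.reindex[OF inj, unfolded comp_def])
  also have "\<dots> = (\<Sum>ks\<in>Iset N (length bs). x (Suc N) ^ k * (\<Prod>j<length bs. x (ks ! j) ^ (bs ! j)))"
  proof (rule sum.cong[OF refl])
    fix ks assume "ks \<in> Iset N (length bs)"
    then have l: "length ks = length bs" unfolding Iset_def by auto
    have "?f (ks @ [Suc N]) = (\<Prod>j<length bs. x ((ks@[Suc N]) ! j) ^ ((bs@[k]) ! j)) * x (Suc N) ^ k"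
      using l by (simp add: nth_append)
    also have "(\<Prod>j<length bs. x ((ks@[Suc N]) ! j) ^ ((bs@[k]) ! j)) = (\<Prod>j<length bs. x (ks ! j) ^ (bs ! j))"
      using l by (intro prod.cong) (auto simp: nth_append)
    finally show "?f (ks @ [Suc N]) = x (Suc N) ^ k * (\<Prod>j<length bs. x (ks ! j) ^ (bs ! j))" by simp
  qed
  also have "\<dots> = x (Suc N) ^ last \<beta> * Mq N (butlast \<beta>) x"
    unfolding Mq_alt snoc by (simp add: sum_distrib_left)
  finally show ?thesis using snoc by simp
qed


definition pos :: "nat list \<Rightarrow> bool" where "pos \<alpha> \<longleftrightarrow> (\<forall>a\<in>set \<alpha>. 0 < a)"

definition Co :: "nat list \<Rightarrow> nat list set" where
  "Co \<alpha> = {\<beta>. composition (sum_list \<alpha>) \<beta> \<and> Sset \<beta> \<subseteq> Sset \<alpha>}"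

definition V :: "nat \<Rightarrow> (nat \<Rightarrow> real) \<Rightarrow> nat list \<Rightarrow> real" where
  "V N x \<alpha> = (\<Sum>\<beta>\<in>Co \<alpha>. Mq N \<beta> x / real (pi2 \<alpha> \<beta>))"

lemma len_le_sum: "pos \<beta> \<Longrightarrow> length \<beta> \<le> sum_list \<beta>"
  by (induction \<beta>) (auto simp: pos_def)

lemma finite_Co: "finite (Co \<alpha>)"
proof -
  have "Co \<alpha> \<subseteq> {xs. set xs \<subseteq> {0..sum_list \<alpha>} \<and> length xs \<le> sum_list \<alpha>}"
  proof
    fix \<beta> assume "\<beta> \<in> Co \<alpha>"
    then have "sum_list \<beta> = sum_list \<alpha>" "pos \<beta>" unfolding Co_def composition_def pos_def by auto
    then show "\<beta> \<in> {xs. set xs \<subseteq> {0..sum_list \<alpha>} \<and> length xs \<le> sum_list \<alpha>}"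
      using len_le_sum[of \<beta>] member_le_sum_list[of _ \<beta>] by auto
  qed
  moreover have "finite {xs. set xs \<subseteq> {0..sum_list \<alpha>} \<and> length xs \<le> sum_list \<alpha>}"
    by (rule finite_lists_length_le) simp
  ultimately show ?thesis by (rule finite_subset)
qed

lemma sum_pos: "pos \<alpha> \<Longrightarrow> \<alpha> \<noteq> [] \<Longrightarrow> 0 < sum_list \<alpha>"
  by (cases \<alpha>) (auto simp: pos_def)

lemma pos_take: "pos \<alpha> \<Longrightarrow> pos (take m \<alpha>)" unfolding pos_def by (meson in_set_takeD)
lemma pos_drop: "pos \<alpha> \<Longrightarrow> pos (drop m \<alpha>)" unfolding pos_def by (meson in_set_dropD)

lemma psum_split: "i \<le> j \<Longrightarrow> sum_list (take j (\<alpha>::nat list)) = sum_list (take i \<alpha>) + sum_list (take (j - i) (drop i \<alpha>))"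
  by (metis le_add_diff_inverse sum_list_append take_add)

lemma psum_mono: "i \<le> j \<Longrightarrow> sum_list (take i (\<alpha>::nat list)) \<le> sum_list (take j \<alpha>)"
  using psum_split[of i j \<alpha>] by linarith

lemma psum_strict: assumes "pos \<alpha>" "i < j" "j \<le> length \<alpha>"
  shows "sum_list (take i \<alpha>) < sum_list (take j \<alpha>)"
proof -
  have "take (j - i) (drop i \<alpha>) \<noteq> []" using assms by auto
  moreover have "pos (take (j - i) (drop i \<alpha>))" using assms by (simp add: pos_take pos_drop)
  ultimately have "0 < sum_list (take (j - i) (drop i \<alpha>))" using sum_pos by blast
  then show ?thesis using psum_split[of i j \<alpha>] assms by simp
qed

lemma psum_inj: assumes "pos \<alpha>" "i \<le> length \<alpha>" "j \<le> length \<alpha>"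
  "sum_list (take i \<alpha>) = sum_list (take j \<alpha>)" shows "i = j"
proof (rule ccontr)
  assume "i \<noteq> j"
  then have "i < j \<or> j < i" by arith
  then show False using psum_strict[OF assms(1), of i j] psum_strict[OF assms(1), of j i] assms by auto
qed

lemma psum_le_sum: "sum_list (take i (\<alpha>::nat list)) \<le> sum_list \<alpha>"
  using sum_list_append[of "take i \<alpha>" "drop i \<alpha>"] by simp

lemma Sset_snoc: "Sset ((\<beta>::nat list) @ [s]) = Sset \<beta> \<union> (if \<beta> = [] then {} else {sum_list \<beta>})"
proof -
  have t: "i < Suc (length \<beta>) \<Longrightarrow> take i (\<beta> @ [s]) = take i \<beta>" for i by simp
  have "Sset (\<beta> @ [s]) = {sum_list (take i \<beta>) |i. 1 \<le> i \<and> i < Suc (length \<beta>)}"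
    unfolding Sset_def length_append_singleton by (intro Collect_cong ex_cong1) (auto simp: t)
  also have "\<dots> = Sset \<beta> \<union> (if \<beta> = [] then {} else {sum_list \<beta>})"
  proof (intro equalityI subsetI)
    fix y assume "y \<in> {sum_list (take i \<beta>) |i. 1 \<le> i \<and> i < Suc (length \<beta>)}"
    then obtain i where "y = sum_list (take i \<beta>)" "1 \<le> i" "i < Suc (length \<beta>)" by auto
    then show "y \<in> Sset \<beta> \<union> (if \<beta> = [] then {} else {sum_list \<beta>})"
      unfolding Sset_def by (cases "i = length \<beta>") auto
  next
    fix y assume "y \<in> Sset \<beta> \<union> (if \<beta> = [] then {} else {sum_list \<beta>})"
    then show "y \<in> {sum_list (take i \<beta>) |i. 1 \<le> i \<and> i < Suc (length \<beta>)}"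
    proof
      assume "y \<in> Sset \<beta>" then show ?thesis unfolding Sset_def by fastforce
    next
      assume "y \<in> (if \<beta> = [] then {} else {sum_list \<beta>})"
      then have "\<beta> \<noteq> []" "y = sum_list (take (length \<beta>) \<beta>)" by (auto split: if_splits)
      then show ?thesis by (intro CollectI exI[of _ "length \<beta>"]) (auto simp: Suc_le_eq)
    qed
  qed
  finally show ?thesis .
qed

lemma Sset_lt: "x \<in> Sset \<beta> \<Longrightarrow> pos \<beta> \<Longrightarrow> x < sum_list \<beta>"
  unfolding Sset_def using psum_strict[of \<beta> _ "length \<beta>"] by fastforce

lemma Sset_take: assumes "pos \<alpha>" "m \<le> length \<alpha>"
  shows "Sset (take m \<alpha>) = Sset \<alpha> \<inter> {..< sum_list (take m \<alpha>)}"
proof (intro equalityI subsetI)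
  fix x assume "x \<in> Sset (take m \<alpha>)"
  then obtain i where "x = sum_list (take i (take m \<alpha>))" "1 \<le> i" "i < m" using assms
    unfolding Sset_def by auto
  then show "x \<in> Sset \<alpha> \<inter> {..< sum_list (take m \<alpha>)}"
    using assms psum_strict[OF assms(1), of i m] unfolding Sset_def by (auto simp: min_def)
next
  fix x assume "x \<in> Sset \<alpha> \<inter> {..< sum_list (take m \<alpha>)}"
  then obtain i where i: "x = sum_list (take i \<alpha>)" "1 \<le> i" "i < length \<alpha>" "x < sum_list (take m \<alpha>)"
    unfolding Sset_def by auto
  have "i < m" using i psum_mono[of m i \<alpha>] by (metis not_le)
  then show "x \<in> Sset (take m \<alpha>)" using i assms unfolding Sset_def
    by (intro CollectI exI[of _ i]) (auto simp: min_def)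
qed


lemma Co_Nil: "pos \<alpha> \<Longrightarrow> [] \<in> Co \<alpha> \<longleftrightarrow> \<alpha> = []"
proof
  assume p: "pos \<alpha>" and "[] \<in> Co \<alpha>"
  then have c: "composition (sum_list \<alpha>) []" unfolding Co_def by blast
  then have s0: "sum_list [] = sum_list \<alpha>" unfolding composition_def by (rule conjunct1)
  show "\<alpha> = []"
  proof (rule ccontr)
    assume "\<alpha> \<noteq> []" then have "0 < sum_list \<alpha>" using sum_pos[OF p] by blast
    then show False using s0 sum_list_simps(1)[where 'a=nat] by linarith
  qed
next
  assume "\<alpha> = []" then show "[] \<in> Co \<alpha>" unfolding Co_def composition_def Sset_def by simp
qed

lemma Co_snoc_img: assumes "pos \<alpha>"
  shows "{\<beta>\<in>Co \<alpha>. \<beta> \<noteq> []} = (\<lambda>(m,\<beta>'). \<beta>' @ [sum_list (drop m \<alpha>)]) ` (SIGMA m:{..<length \<alpha>}. Co (take m \<alpha>))"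
proof (intro equalityI subsetI)
  fix \<beta> assume b: "\<beta> \<in> {\<beta>\<in>Co \<alpha>. \<beta> \<noteq> []}"
  then have "\<beta> \<noteq> []" by simp
  then obtain \<beta>' s where bd: "\<beta> = \<beta>' @ [s]" by (cases \<beta> rule: rev_exhaust) auto
  have comp: "sum_list \<beta> = sum_list \<alpha>" "pos \<beta>" and ss: "Sset \<beta> \<subseteq> Sset \<alpha>"
    using b unfolding Co_def composition_def pos_def by auto
  have posb': "pos \<beta>'" using comp(2) bd unfolding pos_def by auto
  obtain m where m: "m < length \<alpha>" "sum_list (take m \<alpha>) = sum_list \<beta>'"
  proof (cases "\<beta>' = []")
    case True
    have "\<alpha> \<noteq> []" using comp bd sum_pos[of \<beta>] by auto
    then show ?thesis using that[of 0] True by auto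
  next
    case False
    then have "sum_list \<beta>' \<in> Sset \<alpha>" using ss bd Sset_snoc by auto
    then show ?thesis using that unfolding Sset_def by auto
  qed
  have "sum_list \<alpha> = sum_list (take m \<alpha>) + sum_list (drop m \<alpha>)"
    using sum_list_append[of "take m \<alpha>" "drop m \<alpha>"] by simp
  then have sd: "s = sum_list (drop m \<alpha>)"
    using comp(1) m(2) bd by simp
  have "\<beta>' \<in> Co (take m \<alpha>)"
  proof -
    have "Sset \<beta>' \<subseteq> Sset (take m \<alpha>)"
    proof
      fix y assume y: "y \<in> Sset \<beta>'"
      then have "y \<in> Sset \<alpha>" using ss bd Sset_snoc by auto
      moreover have "y < sum_list (take m \<alpha>)" using Sset_lt[OF y posb'] m by simp
      ultimately show "y \<in> Sset (take m \<alpha>)" using Sset_take[OF assms, of m] m by auto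
    qed
    then show ?thesis unfolding Co_def composition_def using m posb' unfolding pos_def by auto
  qed
  then show "\<beta> \<in> (\<lambda>(m,\<beta>'). \<beta>' @ [sum_list (drop m \<alpha>)]) ` (SIGMA m:{..<length \<alpha>}. Co (take m \<alpha>))"
    using m bd sd by auto
next
  fix \<beta> assume "\<beta> \<in> (\<lambda>(m,\<beta>'). \<beta>' @ [sum_list (drop m \<alpha>)]) ` (SIGMA m:{..<length \<alpha>}. Co (take m \<alpha>))"
  then obtain m \<beta>' where m: "m < length \<alpha>" "\<beta>' \<in> Co (take m \<alpha>)" and bd: "\<beta> = \<beta>' @ [sum_list (drop m \<alpha>)]"
    by auto
  have c': "sum_list \<beta>' = sum_list (take m \<alpha>)" "pos \<beta>'" "Sset \<beta>' \<subseteq> Sset (take m \<alpha>)"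
    using m(2) unfolding Co_def composition_def pos_def by auto
  have sp: "0 < sum_list (drop m \<alpha>)" using sum_pos[OF pos_drop[OF assms]] m by auto
  have "sum_list \<alpha> = sum_list (take m \<alpha>) + sum_list (drop m \<alpha>)"
    using sum_list_append[of "take m \<alpha>" "drop m \<alpha>"] by simp
  then have "sum_list \<beta> = sum_list \<alpha>" using bd c'(1) by simp
  moreover have "pos \<beta>" using bd c'(2) sp unfolding pos_def by auto
  moreover have "Sset \<beta> \<subseteq> Sset \<alpha>"
  proof -
    have "Sset \<beta>' \<subseteq> Sset \<alpha>" using c'(3) Sset_take[OF assms, of m] m by auto
    moreover have "\<beta>' \<noteq> [] \<Longrightarrow> sum_list \<beta>' \<in> Sset \<alpha>"
    proof -
      assume ne: "\<beta>' \<noteq> []"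
      then have "0 < sum_list (take m \<alpha>)" using sum_pos[OF c'(2)] c'(1) by simp
      then have "1 \<le> m" by (cases m) auto
      then show ?thesis using c'(1) m(1) unfolding Sset_def by auto
    qed
    ultimately show ?thesis using bd Sset_snoc by auto
  qed
  moreover have "\<beta> \<noteq> []" using bd by simp
  ultimately show "\<beta> \<in> {\<beta>\<in>Co \<alpha>. \<beta> \<noteq> []}" unfolding Co_def composition_def pos_def by blast
qed

lemma Co_snoc_inj: assumes "pos \<alpha>"
  shows "inj_on (\<lambda>(m,\<beta>'). \<beta>' @ [sum_list (drop m \<alpha>)]) (SIGMA m:{..<length \<alpha>}. Co (take m \<alpha>))"
proof (rule inj_onI)
  fix p q assume pq: "p \<in> (SIGMA m:{..<length \<alpha>}. Co (take m \<alpha>))" "q \<in> (SIGMA m:{..<length \<alpha>}. Co (take m \<alpha>))"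
    "(\<lambda>(m,\<beta>'). \<beta>' @ [sum_list (drop m \<alpha>)]) p = (\<lambda>(m,\<beta>'). \<beta>' @ [sum_list (drop m \<alpha>)]) q"
  obtain m1 b1 where p: "p = (m1, b1)" by (cases p)
  obtain m2 b2 where q: "q = (m2, b2)" by (cases q)
  have a: "m1 < length \<alpha>" "b1 \<in> Co (take m1 \<alpha>)" "m2 < length \<alpha>" "b2 \<in> Co (take m2 \<alpha>)"
    "b1 @ [sum_list (drop m1 \<alpha>)] = b2 @ [sum_list (drop m2 \<alpha>)]" using pq p q by auto
  then have "b1 = b2" by simp
  then have "sum_list (take m1 \<alpha>) = sum_list (take m2 \<alpha>)" using a unfolding Co_def composition_def by auto
  then have "m1 = m2" using psum_inj[OF assms, of m1 m2] a(1,3) by linarith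
  then show "p = q" using \<open>b1 = b2\<close> p q by simp
qed


lemma block_ne: assumes "pos \<alpha>" "1 \<le> j" "j \<le> length \<alpha>" shows "block \<alpha> j \<noteq> {}"
proof -
  have "sum_list (take (j - 1) \<alpha>) < sum_list (take j \<alpha>)" using psum_strict[OF assms(1), of "j-1" j] assms by simp
  then show ?thesis unfolding block_def by simp
qed

lemma block_le: assumes "j \<le> m" shows "block (\<alpha>::nat list) j \<subseteq> {..sum_list (take m \<alpha>)}"
proof -
  have h: "sum_list (take j \<alpha>) \<le> sum_list (take m \<alpha>)" using psum_mono[OF assms] .
  show ?thesis unfolding block_def
  proof (intro subsetI)
    fix y assume "y \<in> {sum_list (take (j - 1) \<alpha>) + 1..sum_list (take j \<alpha>)}"
    then have "y \<le> sum_list (take j \<alpha>)" by simp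
    then show "y \<in> {..sum_list (take m \<alpha>)}" using h by simp
  qed
qed

lemma block_gt: assumes "m < j" shows "block (\<alpha>::nat list) j \<subseteq> {sum_list (take m \<alpha>)<..}"
proof -
  have "sum_list (take m \<alpha>) \<le> sum_list (take (j - 1) \<alpha>)" by (rule psum_mono) (use assms in arith)
  then show ?thesis unfolding block_def by auto
qed

lemma block_upper: "block (\<alpha>::nat list) j \<subseteq> {..sum_list \<alpha>}"
  unfolding block_def using psum_le_sum[of j \<alpha>] by auto

lemma block_take: assumes "j \<le> m" shows "block (take m \<alpha>) j = block \<alpha> j"
proof -
  have "j - 1 \<le> m" using assms by arith
  then have "take (j-1) (take m \<alpha>) = take (j-1) \<alpha>" "take j (take m \<alpha>) = take j \<alpha>"
    using assms by (simp_all add: min_def)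
  then show ?thesis unfolding block_def by simp
qed

lemma block_snoc: "i \<le> length \<beta> \<Longrightarrow> block (\<beta> @ [s]) i = block \<beta> i"
  unfolding block_def by simp

lemma block_snoc_last: "block (\<beta> @ [s]) (Suc (length \<beta>)) = {sum_list \<beta> + 1 .. sum_list \<beta> + s}"
  unfolding block_def by simp

lemma map_upt_drop: "map (\<lambda>j. \<alpha> ! (j - 1)) [m + 1..<length \<alpha> + 1] = drop m \<alpha>"
  by (rule nth_equalityI) (simp_all del: upt_Suc add: nth_upt)

lemma subcomp_snoc:
  assumes p: "pos \<alpha>" and m: "m < length \<alpha>" and b: "sum_list \<beta>' = sum_list (take m \<alpha>)"
  shows "1 \<le> i \<Longrightarrow> i \<le> length \<beta>' \<Longrightarrow> subcomp \<alpha> (\<beta>' @ [sum_list (drop m \<alpha>)]) i = subcomp (take m \<alpha>) \<beta>' i"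
    and "subcomp \<alpha> (\<beta>' @ [sum_list (drop m \<alpha>)]) (Suc (length \<beta>')) = drop m \<alpha>"
proof -
  let ?t = "sum_list (take m \<alpha>)"
  let ?\<beta> = "\<beta>' @ [sum_list (drop m \<alpha>)]"
  have split: "[1..<length \<alpha> + 1] = [1..<m+1] @ [m+1..<length \<alpha> + 1]"
  proof -
    have e: "length \<alpha> + 1 = m + 1 + (length \<alpha> - m)" using m by simp
    have "[1..<m+1+(length \<alpha> - m)] = [1..<m+1] @ [m+1..<m+1+(length \<alpha> - m)]"
      by (rule upt_add_eq_append) simp
    from this[folded e] show ?thesis .
  qed
  have lt: "length (take m \<alpha>) = m" using m by simp
  {
    assume i: "1 \<le> i" "i \<le> length \<beta>'"
    have bi: "block ?\<beta> i = block \<beta>' i" using i block_snoc by blast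
    have bile: "block \<beta>' i \<subseteq> {..?t}" using block_le[of i "length \<beta>'" \<beta>'] i b by simp
    have f2: "filter (\<lambda>j. block \<alpha> j \<subseteq> block ?\<beta> i) [m+1..<length \<alpha> + 1] = []"
    proof (rule filter_False, rule ballI)
      fix j assume "j \<in> set [m+1..<length \<alpha> + 1]"
      then have j: "m < j" "1 \<le> j" "j \<le> length \<alpha>" by auto
      obtain y where y: "y \<in> block \<alpha> j" using block_ne[OF p j(2,3)] by blast
      have "y > ?t" using y block_gt[OF j(1), of \<alpha>] by auto
      then have "y \<notin> block ?\<beta> i" using bi bile by auto
      then show "\<not> block \<alpha> j \<subseteq> block ?\<beta> i" using y by blast
    qed
    have f1: "filter (\<lambda>j. block \<alpha> j \<subseteq> block ?\<beta> i) [1..<m+1] = filter (\<lambda>j. block (take m \<alpha>) j \<subseteq> block \<beta>' i) [1..<m+1]"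
      by (rule filter_cong) (auto simp: bi block_take)
    show "subcomp \<alpha> ?\<beta> i = subcomp (take m \<alpha>) \<beta>' i"
      unfolding subcomp_def lt split filter_append f2 f1 append_Nil2
      by (rule map_cong) auto
  }
  have bl: "block ?\<beta> (Suc (length \<beta>')) = {?t + 1 .. sum_list \<alpha>}"
  proof -
    have "sum_list \<alpha> = ?t + sum_list (drop m \<alpha>)" using sum_list_append[of "take m \<alpha>" "drop m \<alpha>"] by simp
    then show ?thesis using block_snoc_last[of \<beta>'] b by simp
  qed
  have f1: "filter (\<lambda>j. block \<alpha> j \<subseteq> block ?\<beta> (Suc (length \<beta>'))) [1..<m+1] = []"
  proof (rule filter_False, rule ballI)
    fix j assume "j \<in> set [1..<m+1]"
    then have j: "j \<le> m" "1 \<le> j" "j \<le> length \<alpha>" using m by auto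
    obtain y where y: "y \<in> block \<alpha> j" using block_ne[OF p j(2,3)] by blast
    have "y \<le> ?t" using y block_le[OF j(1), of \<alpha>] by auto
    then show "\<not> block \<alpha> j \<subseteq> block ?\<beta> (Suc (length \<beta>'))" using y bl by auto
  qed
  have f2: "filter (\<lambda>j. block \<alpha> j \<subseteq> block ?\<beta> (Suc (length \<beta>'))) [m+1..<length \<alpha> + 1] = [m+1..<length \<alpha> + 1]"
  proof (rule filter_True, rule ballI)
    fix j assume "j \<in> set [m+1..<length \<alpha> + 1]"
    then have j: "m < j" by auto
    show "block \<alpha> j \<subseteq> block ?\<beta> (Suc (length \<beta>'))"
      using block_gt[OF j, of \<alpha>] block_upper[of \<alpha> j] unfolding bl by (auto simp: subset_iff Suc_le_eq)
  qed
  show "subcomp \<alpha> ?\<beta> (Suc (length \<beta>')) = drop m \<alpha>"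
    unfolding subcomp_def split filter_append f1 f2 append_Nil map_upt_drop ..
qed

lemma pi2_snoc:
  assumes p: "pos \<alpha>" and m: "m < length \<alpha>" and b: "sum_list \<beta>' = sum_list (take m \<alpha>)"
  shows "pi2 \<alpha> (\<beta>' @ [sum_list (drop m \<alpha>)]) = pi2 (take m \<alpha>) \<beta>' * pi1 (drop m \<alpha>)"
proof -
  have "pi2 \<alpha> (\<beta>' @ [sum_list (drop m \<alpha>)]) =
     (\<Prod>i = 1..Suc (length \<beta>'). pi1 (subcomp \<alpha> (\<beta>' @ [sum_list (drop m \<alpha>)]) i))"
    unfolding pi2_def by simp
  also have "\<dots> = (\<Prod>i = 1..length \<beta>'. pi1 (subcomp \<alpha> (\<beta>' @ [sum_list (drop m \<alpha>)]) i)) *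
      pi1 (subcomp \<alpha> (\<beta>' @ [sum_list (drop m \<alpha>)]) (Suc (length \<beta>')))"
    by simp
  also have "\<dots> = pi2 (take m \<alpha>) \<beta>' * pi1 (drop m \<alpha>)"
  proof -
    have "(\<Prod>i = 1..length \<beta>'. pi1 (subcomp \<alpha> (\<beta>' @ [sum_list (drop m \<alpha>)]) i)) = pi2 (take m \<alpha>) \<beta>'"
      unfolding pi2_def by (rule prod.cong[OF refl]) (simp add: subcomp_snoc(1)[OF assms])
    then show ?thesis unfolding subcomp_snoc(2)[OF assms] by simp
  qed
  finally show ?thesis .
qed

lemma V_0: assumes "pos \<alpha>" shows "V 0 x \<alpha> = (if \<alpha> = [] then 1 else 0)"
proof -
  have "V 0 x \<alpha> = (\<Sum>\<beta>\<in>Co \<alpha>. if \<beta> = [] then 1 / real (pi2 \<alpha> \<beta>) else 0)"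
    unfolding V_def Mq_0 by (rule sum.cong) auto
  also have "\<dots> = (if [] \<in> Co \<alpha> then 1 / real (pi2 \<alpha> []) else 0)"
    by (rule sum.delta[OF finite_Co])
  also have "\<dots> = (if \<alpha> = [] then 1 else 0)" using Co_Nil[OF assms] by (simp add: pi2_def)
  finally show ?thesis .
qed

lemma V_Suc: assumes p: "pos \<alpha>"
  shows "V (Suc N) x \<alpha> = V N x \<alpha> +
    (\<Sum>m<length \<alpha>. x (Suc N) ^ sum_list (drop m \<alpha>) / real (pi1 (drop m \<alpha>)) * V N x (take m \<alpha>))"
proof -
  let ?g = "\<lambda>\<beta>. x (Suc N) ^ last \<beta> * Mq N (butlast \<beta>) x / real (pi2 \<alpha> \<beta>)"
  let ?h = "\<lambda>(m,\<beta>'). \<beta>' @ [sum_list (drop m \<alpha>)]"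
  have "V (Suc N) x \<alpha> = V N x \<alpha> + (\<Sum>\<beta>\<in>Co \<alpha>. if \<beta> \<noteq> [] then ?g \<beta> else 0)"
  proof -
    have "V (Suc N) x \<alpha> = (\<Sum>\<beta>\<in>Co \<alpha>. Mq N \<beta> x / real (pi2 \<alpha> \<beta>) + (if \<beta> \<noteq> [] then ?g \<beta> else 0))"
      unfolding V_def Mq_Suc by (rule sum.cong[OF refl]) (simp add: add_divide_distrib)
    then show ?thesis unfolding V_def by (simp add: sum.distrib)
  qed
  also have "(\<Sum>\<beta>\<in>Co \<alpha>. if \<beta> \<noteq> [] then ?g \<beta> else 0) = sum ?g {\<beta>\<in>Co \<alpha>. \<beta> \<noteq> []}"
    by (rule sum.inter_filter[OF finite_Co, symmetric])
  also have "\<dots> = sum (?g \<circ> ?h) (SIGMA m:{..<length \<alpha>}. Co (take m \<alpha>))"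
    unfolding Co_snoc_img[OF p] by (rule sum.reindex[OF Co_snoc_inj[OF p]])
  also have "\<dots> = (\<Sum>(m,\<beta>')\<in>(SIGMA m:{..<length \<alpha>}. Co (take m \<alpha>)). (?g \<circ> ?h) (m, \<beta>'))"
    by (rule sum.cong) auto
  also have "\<dots> = (\<Sum>m<length \<alpha>. \<Sum>\<beta>'\<in>Co (take m \<alpha>). (?g \<circ> ?h) (m, \<beta>'))"
    by (rule sum.Sigma[symmetric]) (auto simp: finite_Co)
  also have "\<dots> = (\<Sum>m<length \<alpha>. x (Suc N) ^ sum_list (drop m \<alpha>) / real (pi1 (drop m \<alpha>)) * V N x (take m \<alpha>))"
  proof (rule sum.cong[OF refl])
    fix m assume m: "m \<in> {..<length \<alpha>}"
    have "(\<Sum>\<beta>'\<in>Co (take m \<alpha>). (?g \<circ> ?h) (m, \<beta>')) =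
       (\<Sum>\<beta>'\<in>Co (take m \<alpha>). x (Suc N) ^ sum_list (drop m \<alpha>) / real (pi1 (drop m \<alpha>)) * (Mq N \<beta>' x / real (pi2 (take m \<alpha>) \<beta>')))"
    proof (rule sum.cong[OF refl])
      fix \<beta>' assume "\<beta>' \<in> Co (take m \<alpha>)"
      then have "sum_list \<beta>' = sum_list (take m \<alpha>)" unfolding Co_def composition_def by blast
      then show "(?g \<circ> ?h) (m, \<beta>') = x (Suc N) ^ sum_list (drop m \<alpha>) / real (pi1 (drop m \<alpha>)) * (Mq N \<beta>' x / real (pi2 (take m \<alpha>) \<beta>'))"
        using pi2_snoc[OF p, of m \<beta>'] m by simp
    qed
    also have "\<dots> = x (Suc N) ^ sum_list (drop m \<alpha>) / real (pi1 (drop m \<alpha>)) * V N x (take m \<alpha>)"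
      unfolding V_def by (simp add: sum_distrib_left)
    finally show "(\<Sum>\<beta>'\<in>Co (take m \<alpha>). (?g \<circ> ?h) (m, \<beta>')) = \<dots>" .
  qed
  finally show ?thesis .
qed


definition Rl :: "('a \<Rightarrow> 'a \<Rightarrow> bool) \<Rightarrow> 'a \<Rightarrow> 'a \<Rightarrow> bool" where
  "Rl le a b \<longleftrightarrow> \<not> plt le b a"

definition unimod :: "nat list \<Rightarrow> bool" where
  "unimod ys \<longleftrightarrow> (\<exists>k<length ys. (\<forall>j<k. ys ! j > ys ! Suc j) \<and>
      (\<forall>j. k \<le> j \<and> Suc j < length ys \<longrightarrow> ys ! j < ys ! Suc j))"

definition goodb :: "('a \<Rightarrow> 'a \<Rightarrow> bool) \<Rightarrow> ('a \<Rightarrow> nat) \<Rightarrow> 'a list \<Rightarrow> bool" where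
  "goodb le w b \<longleftrightarrow> b \<noteq> [] \<and> unimod (map w b) \<and> unique_minimal le (set b)"

definition good :: "('a \<Rightarrow> 'a \<Rightarrow> bool) \<Rightarrow> ('a \<Rightarrow> nat) \<Rightarrow> 'a set \<Rightarrow> 'a list list \<Rightarrow> bool" where
  "good le w Q bl \<longleftrightarrow> (\<forall>b\<in>set bl. goodb le w b) \<and> distinct (concat bl) \<and> set (concat bl) = Q \<and>
     sorted_wrt (Rl le) (concat bl)"

definition G :: "('a \<Rightarrow> 'a \<Rightarrow> bool) \<Rightarrow> ('a \<Rightarrow> nat) \<Rightarrow> 'a set \<Rightarrow> 'a list list set" where
  "G le w Q = {bl. good le w Q bl}"

definition upc :: "('a \<Rightarrow> 'a \<Rightarrow> bool) \<Rightarrow> 'a set \<Rightarrow> 'a set \<Rightarrow> bool" where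
  "upc le Q U \<longleftrightarrow> U \<subseteq> Q \<and> (\<forall>p\<in>U. \<forall>q\<in>Q - U. \<not> plt le p q)"

definition Ups :: "('a \<Rightarrow> 'a \<Rightarrow> bool) \<Rightarrow> 'a set \<Rightarrow> 'a set set" where
  "Ups le Q = {U. upc le Q U}"

lemma good_append: "good le w Q (bl1 @ bl2) \<longleftrightarrow>
   upc le Q (set (concat bl2)) \<and> good le w (set (concat bl2)) bl2 \<and> good le w (Q - set (concat bl2)) bl1"
  (is "?L \<longleftrightarrow> ?R")
proof
  assume L: ?L
  let ?c1 = "concat bl1" and ?c2 = "concat bl2"
  have d: "distinct ?c1" "distinct ?c2" "set ?c1 \<inter> set ?c2 = {}" and s: "set ?c1 \<union> set ?c2 = Q"
    and so: "sorted_wrt (Rl le) ?c1" "sorted_wrt (Rl le) ?c2" "\<forall>a\<in>set ?c1. \<forall>b\<in>set ?c2. Rl le a b"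
    and gb: "\<forall>b\<in>set bl1. goodb le w b" "\<forall>b\<in>set bl2. goodb le w b"
    using L unfolding good_def by (auto simp: sorted_wrt_append)
  have s1: "set ?c1 = Q - set ?c2" using d s by blast
  have "upc le Q (set ?c2)" unfolding upc_def using s so(3) s1 unfolding Rl_def by blast
  then show ?R unfolding good_def using d s1 so gb by blast
next
  assume R: ?R
  let ?c1 = "concat bl1" and ?c2 = "concat bl2"
  have u: "set ?c2 \<subseteq> Q" "\<forall>p\<in>set ?c2. \<forall>q\<in>Q - set ?c2. \<not> plt le p q" using R unfolding upc_def by auto
  have g2: "\<forall>b\<in>set bl2. goodb le w b" "distinct ?c2" "sorted_wrt (Rl le) ?c2"
    using R unfolding good_def by auto
  have g1: "\<forall>b\<in>set bl1. goodb le w b" "distinct ?c1" "sorted_wrt (Rl le) ?c1" "set ?c1 = Q - set ?c2"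
    using R unfolding good_def by auto
  have cr: "\<forall>a\<in>set ?c1. \<forall>b\<in>set ?c2. Rl le a b"
  proof (intro ballI)
    fix a b assume "a \<in> set ?c1" "b \<in> set ?c2"
    then have "a \<in> Q - set ?c2" unfolding g1(4) by blast
    then show "Rl le a b" using u(2) \<open>b \<in> set ?c2\<close> unfolding Rl_def by blast
  qed
  have "sorted_wrt (Rl le) (?c1 @ ?c2)" unfolding sorted_wrt_append using g1(3) g2(3) cr by blast
  moreover have "set (concat (bl1 @ bl2)) = Q" using g1(4) u(1) by auto
  moreover have "distinct (concat (bl1 @ bl2))" using g1(2,4) g2(2) by auto
  moreover have "\<forall>b\<in>set (bl1 @ bl2). goodb le w b" using g1(1) g2(1) by auto
  ultimately show ?L unfolding good_def by simp
qed

lemma good_Nil: "good le w Q [] \<longleftrightarrow> Q = {}"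
  unfolding good_def by auto

lemma good_empty: "good le w {} bl \<longleftrightarrow> bl = []"
proof
  assume g: "good le w {} bl"
  show "bl = []"
  proof (rule ccontr)
    assume "bl \<noteq> []"
    then obtain b where "b \<in> set bl" by (cases bl) auto
    then have "b \<noteq> []" "set b \<subseteq> set (concat bl)" using g unfolding good_def goodb_def by auto
    then show False using g unfolding good_def by (cases b) auto
  qed
qed (simp add: good_Nil)

lemma good_blocks_ne: "good le w Q bl \<Longrightarrow> b \<in> set bl \<Longrightarrow> b \<noteq> []"
  unfolding good_def goodb_def by auto

lemma good_pos: "good le w Q bl \<Longrightarrow> pos (map length bl)"
  unfolding pos_def using good_blocks_ne by fastforce

lemma good_card: "good le w Q bl \<Longrightarrow> sum_list (map length bl) = card Q"
  unfolding good_def by (metis distinct_card length_concat)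

lemma finite_G: assumes "finite Q" shows "finite (G le w Q)"
proof -
  let ?A = "{b. set b \<subseteq> Q \<and> length b \<le> card Q}"
  have fA: "finite ?A" using finite_lists_length_le[OF assms] by simp
  have "G le w Q \<subseteq> {bl. set bl \<subseteq> ?A \<and> length bl \<le> card Q}"
  proof
    fix bl assume "bl \<in> G le w Q"
    then have g: "good le w Q bl" unfolding G_def by simp
    have lc: "length (concat bl) = card Q" using g unfolding good_def by (metis distinct_card)
    have "length bl \<le> length (concat bl)"
      using good_pos[OF g] len_le_sum[of "map length bl"] by (simp add: length_concat)
    moreover have "\<forall>b\<in>set bl. set b \<subseteq> Q \<and> length b \<le> card Q"
    proof
      fix b assume b: "b \<in> set bl"
      have "length b \<le> sum_list (map length bl)" using b by (simp add: member_le_sum_list)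
      then show "set b \<subseteq> Q \<and> length b \<le> card Q" using b g lc unfolding good_def by (auto simp: length_concat)
    qed
    ultimately show "bl \<in> {bl. set bl \<subseteq> ?A \<and> length bl \<le> card Q}" using lc by auto
  qed
  moreover have "finite {bl. set bl \<subseteq> ?A \<and> length bl \<le> card Q}" using finite_lists_length_le[OF fA] by simp
  ultimately show ?thesis by (rule finite_subset)
qed

lemma finite_Ups: "finite Q \<Longrightarrow> finite (Ups le Q)"
  unfolding Ups_def upc_def by (rule finite_subset[of _ "Pow Q"]) auto

lemma empty_Ups: "{} \<in> Ups le Q"
  unfolding Ups_def upc_def by auto


definition FF :: "'a set \<Rightarrow> ('a \<Rightarrow> 'a \<Rightarrow> bool) \<Rightarrow> nat \<Rightarrow> ('a \<Rightarrow> nat) set" where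
  "FF Q le N = {f \<in> Q \<rightarrow>\<^sub>E {1..N}. \<forall>p\<in>Q. \<forall>q\<in>Q. plt le p q \<longrightarrow> f p \<le> f q}"

lemma KP_FF: "KP Q le N x = (\<Sum>f\<in>FF Q le N. \<Prod>p\<in>Q. x (f p))"
  unfolding KP_def FF_def ..

lemma finite_FF: "finite Q \<Longrightarrow> finite (FF Q le N)"
  unfolding FF_def by (rule finite_subset[OF _ finite_PiE[of Q "\<lambda>_. {1..N}"]]) auto

lemma KP_0: "finite Q \<Longrightarrow> KP Q le 0 x = (if Q = {} then 1 else 0)"
  unfolding KP_FF FF_def by (auto simp: PiE_empty_range)

lemma KP_Suc: assumes fin: "finite Q"
  shows "KP Q le (Suc N) x = (\<Sum>U\<in>Ups le Q. x (Suc N) ^ card U * KP (Q - U) le N x)"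
proof -
  let ?h = "\<lambda>(U, g). (\<lambda>p. if p \<in> U then Suc N else g p)"
  let ?S = "SIGMA U:Ups le Q. FF (Q - U) le N"
  have inj: "inj_on ?h ?S"
  proof (rule inj_onI)
    fix a b assume a: "a \<in> ?S" and b: "b \<in> ?S" and e: "?h a = ?h b"
    obtain U1 g1 where a': "a = (U1, g1)" by (cases a)
    obtain U2 g2 where b': "b = (U2, g2)" by (cases b)
    have U1: "upc le Q U1" "g1 \<in> (Q - U1) \<rightarrow>\<^sub>E {1..N}" using a a' unfolding Ups_def FF_def by auto
    have U2: "upc le Q U2" "g2 \<in> (Q - U2) \<rightarrow>\<^sub>E {1..N}" using b b' unfolding Ups_def FF_def by auto
    have e'': "(\<lambda>p. if p \<in> U1 then Suc N else g1 p) = (\<lambda>p. if p \<in> U2 then Suc N else g2 p)"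
      using e unfolding a' b' by simp
    have e': "\<And>p. (if p \<in> U1 then Suc N else g1 p) = (if p \<in> U2 then Suc N else g2 p)"
      using fun_cong[OF e''] .
    have U: "U1 = U2"
    proof (intro equalityI subsetI)
      fix p assume p: "p \<in> U1"
      then have "p \<in> Q" using U1 unfolding upc_def by auto
      show "p \<in> U2"
      proof (rule ccontr)
        assume "p \<notin> U2"
        then have "g2 p \<in> {1..N}" using PiE_mem[OF U2(2), of p] \<open>p \<in> Q\<close> by blast
        moreover have "Suc N = g2 p" using e'[of p] p \<open>p \<notin> U2\<close> by simp
        ultimately show False by simp
      qed
    next
      fix p assume p: "p \<in> U2"
      then have "p \<in> Q" using U2 unfolding upc_def by auto
      show "p \<in> U1"
      proof (rule ccontr)
        assume "p \<notin> U1"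
        then have "g1 p \<in> {1..N}" using PiE_mem[OF U1(2), of p] \<open>p \<in> Q\<close> by blast
        moreover have "Suc N = g1 p" using e'[of p] p \<open>p \<notin> U1\<close> by simp
        ultimately show False by simp
      qed
    qed
    have "g1 = g2"
    proof
      fix p show "g1 p = g2 p"
      proof (cases "p \<in> U1")
        case True
        then show ?thesis using U1(2) U2(2) U by (auto simp: PiE_def extensional_def)
      next
        case False
        then show ?thesis using e'[of p] U by auto
      qed
    qed
    then show "a = b" using a' b' U by simp
  qed
  have img: "?h ` ?S = FF Q le (Suc N)"
  proof (intro equalityI subsetI)
    fix f assume "f \<in> ?h ` ?S"
    then obtain U g where Ug: "U \<in> Ups le Q" "g \<in> FF (Q - U) le N" and f: "f = ?h (U, g)" by auto
    have u: "U \<subseteq> Q" "\<forall>p\<in>U. \<forall>q\<in>Q - U. \<not> plt le p q" using Ug unfolding Ups_def upc_def by auto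
    have g: "g \<in> (Q - U) \<rightarrow>\<^sub>E {1..N}" "\<forall>p\<in>Q-U. \<forall>q\<in>Q-U. plt le p q \<longrightarrow> g p \<le> g q"
      using Ug unfolding FF_def by auto
    have "f \<in> Q \<rightarrow>\<^sub>E {1..Suc N}"
      using g(1) u(1) unfolding f by (auto simp: PiE_def Pi_def extensional_def)
    moreover have "\<forall>p\<in>Q. \<forall>q\<in>Q. plt le p q \<longrightarrow> f p \<le> f q"
    proof (intro ballI impI)
      fix p q assume pq: "p \<in> Q" "q \<in> Q" "plt le p q"
      show "f p \<le> f q"
      proof (cases "q \<in> U")
        case True
        have "p \<in> U \<Longrightarrow> f p = Suc N" "p \<notin> U \<Longrightarrow> f p \<le> N" using g(1) pq unfolding f by auto
        then show ?thesis using True unfolding f by (cases "p \<in> U") auto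
      next
        case False
        then have "p \<notin> U" using u pq by auto
        then show ?thesis using False g(2) pq unfolding f by auto
      qed
    qed
    ultimately show "f \<in> FF Q le (Suc N)" unfolding FF_def by blast
  next
    fix f assume f: "f \<in> FF Q le (Suc N)"
    have fE: "f \<in> Q \<rightarrow>\<^sub>E {1..Suc N}" and fm: "\<forall>p\<in>Q. \<forall>q\<in>Q. plt le p q \<longrightarrow> f p \<le> f q"
      using f unfolding FF_def by auto
    define U where "U = {p \<in> Q. f p = Suc N}"
    define g where "g = restrict f (Q - U)"
    have "U \<in> Ups le Q" unfolding Ups_def upc_def
    proof (intro CollectI conjI ballI)
      show "U \<subseteq> Q" unfolding U_def by auto
      fix p q assume p: "p \<in> U" and q: "q \<in> Q - U"
      show "\<not> plt le p q"
      proof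
        assume "plt le p q"
        then have "f p \<le> f q" using fm p q unfolding U_def by auto
        moreover have "f q \<le> Suc N" using fE q by auto
        ultimately show False using p q unfolding U_def by auto
      qed
    qed
    moreover have "g \<in> FF (Q - U) le N"
    proof -
      have "g \<in> (Q - U) \<rightarrow>\<^sub>E {1..N}" using fE unfolding g_def U_def by (auto simp: PiE_def Pi_def le_Suc_eq)
      moreover have "\<forall>p\<in>Q-U. \<forall>q\<in>Q-U. plt le p q \<longrightarrow> g p \<le> g q" using fm unfolding g_def by auto
      ultimately show ?thesis unfolding FF_def by blast
    qed
    moreover have "f = ?h (U, g)"
    proof
      fix p show "f p = ?h (U, g) p"
        using fE unfolding g_def U_def by (auto simp: PiE_def extensional_def)
    qed
    ultimately show "f \<in> ?h ` ?S" by blast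
  qed
  have "KP Q le (Suc N) x = (\<Sum>f\<in>?h ` ?S. \<Prod>p\<in>Q. x (f p))" unfolding KP_FF img ..
  also have "\<dots> = (\<Sum>a\<in>?S. \<Prod>p\<in>Q. x (?h a p))" by (rule sum.reindex_cong[OF inj refl]) simp
  also have "\<dots> = (\<Sum>(U,g)\<in>?S. \<Prod>p\<in>Q. x (?h (U,g) p))"
    by (rule sum.cong) auto
  also have "\<dots> = (\<Sum>U\<in>Ups le Q. \<Sum>g\<in>FF (Q - U) le N. \<Prod>p\<in>Q. x (?h (U,g) p))"
    by (rule sum.Sigma[symmetric]) (auto simp: finite_Ups fin finite_FF)
  also have "\<dots> = (\<Sum>U\<in>Ups le Q. x (Suc N) ^ card U * KP (Q - U) le N x)"
  proof (rule sum.cong[OF refl])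
    fix U assume "U \<in> Ups le Q"
    then have UQ: "U \<subseteq> Q" unfolding Ups_def upc_def by auto
    have "(\<Sum>g\<in>FF (Q - U) le N. \<Prod>p\<in>Q. x (?h (U,g) p)) =
        (\<Sum>g\<in>FF (Q - U) le N. x (Suc N) ^ card U * (\<Prod>p\<in>Q - U. x (g p)))"
    proof (rule sum.cong[OF refl])
      fix g
      have "(\<Prod>p\<in>Q. x (?h (U,g) p)) = (\<Prod>p\<in>Q - U. x (?h (U,g) p)) * (\<Prod>p\<in>U. x (?h (U,g) p))"
        by (rule prod.subset_diff[OF UQ fin])
      also have "(\<Prod>p\<in>U. x (?h (U,g) p)) = x (Suc N) ^ card U" by simp
      also have "(\<Prod>p\<in>Q - U. x (?h (U,g) p)) = (\<Prod>p\<in>Q - U. x (g p))" by (rule prod.cong) auto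
      finally show "(\<Prod>p\<in>Q. x (?h (U,g) p)) = x (Suc N) ^ card U * (\<Prod>p\<in>Q - U. x (g p))"
        by (simp add: mult.commute)
    qed
    also have "\<dots> = x (Suc N) ^ card U * KP (Q - U) le N x" unfolding KP_FF by (simp add: sum_distrib_left)
    finally show "(\<Sum>g\<in>FF (Q - U) le N. \<Prod>p\<in>Q. x (?h (U,g) p)) = x (Suc N) ^ card U * KP (Q - U) le N x" .
  qed
  finally show ?thesis .
qed


locale psetup =
  fixes P :: "'a set" and le :: "'a \<Rightarrow> 'a \<Rightarrow> bool" and w :: "'a \<Rightarrow> nat"
  assumes ip: "is_poset P le" and winj: "inj_on w P" and natl: "naturally_labeled P le w"
begin

lemma finP: "finite P" using ip unfolding is_poset_def by blast
lemma prefl: "x \<in> P \<Longrightarrow> le x x" using ip unfolding is_poset_def by blast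
lemma pantisym: "x \<in> P \<Longrightarrow> y \<in> P \<Longrightarrow> le x y \<Longrightarrow> le y x \<Longrightarrow> x = y"
  using ip unfolding is_poset_def by blast
lemma ptrans: "x \<in> P \<Longrightarrow> y \<in> P \<Longrightarrow> z \<in> P \<Longrightarrow> le x y \<Longrightarrow> le y z \<Longrightarrow> le x z"
  using ip unfolding is_poset_def by blast
lemma plt_w: "x \<in> P \<Longrightarrow> y \<in> P \<Longrightarrow> plt le x y \<Longrightarrow> w x < w y"
  using natl unfolding naturally_labeled_def by blast
lemma plt_irrefl: "\<not> plt le x x" unfolding plt_def by simp

lemma min_below:
  assumes S: "S \<subseteq> P" and y: "y \<in> S"
  shows "\<exists>z\<in>S. le z y \<and> (\<forall>q\<in>S. \<not> plt le q z)"
proof -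
  define T where "T = {z\<in>S. le z y}"
  have fT: "finite T" unfolding T_def using finite_subset[OF S finP] by simp
  have yT: "y \<in> T" unfolding T_def using y S prefl by auto
  then have ne: "w ` T \<noteq> {}" by auto
  have "Min (w ` T) \<in> w ` T" using Min_in[OF finite_imageI[OF fT] ne] .
  then obtain z where z: "z \<in> T" "w z = Min (w ` T)" by auto
  have zmin: "\<And>t. t \<in> T \<Longrightarrow> w z \<le> w t" using z(2) fT by simp
  have "\<forall>q\<in>S. \<not> plt le q z"
  proof (intro ballI notI)
    fix q assume q: "q \<in> S" "plt le q z"
    have zS: "z \<in> S" "le z y" using z(1) unfolding T_def by auto
    have "le q y" using ptrans[of q z y] q zS S y unfolding plt_def by auto
    then have "q \<in> T" unfolding T_def using q by auto
    then have "w z \<le> w q" by (rule zmin)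
    moreover have "w q < w z" using plt_w[of q z] q zS S by auto
    ultimately show False by simp
  qed
  then show ?thesis using z(1) unfolding T_def by auto
qed

definition up :: "'a set \<Rightarrow> 'a \<Rightarrow> 'a set" where "up Q u = {y\<in>Q. le u y}"

definition blk :: "'a set \<Rightarrow> 'a \<Rightarrow> 'a list" where
  "blk Q u = map (inv_into P w) (sorted_list_of_set (w ` up Q u))"

definition LB :: "'a set \<Rightarrow> 'a list set" where
  "LB Q = {b. upc le Q (set b) \<and> good le w (set b) [b]}"

lemma good_single: "good le w U [b] \<longleftrightarrow> goodb le w b \<and> distinct b \<and> set b = U \<and> sorted_wrt (Rl le) b"
  unfolding good_def by simp

lemma blk_props:
  assumes Q: "Q \<subseteq> P"
  shows "set (blk Q u) = up Q u" "map w (blk Q u) = sorted_list_of_set (w ` up Q u)" "distinct (blk Q u)"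
proof -
  have uP: "up Q u \<subseteq> P" using Q unfolding up_def by auto
  have fu: "finite (w ` up Q u)" using finite_subset[OF uP finP] by simp
  show "set (blk Q u) = up Q u" unfolding blk_def using fu winj uP by simp
  have "\<forall>l\<in>set (sorted_list_of_set (w ` up Q u)). w (inv_into P w l) = l"
    using fu uP by (auto intro: f_inv_into_f)
  then show mw: "map w (blk Q u) = sorted_list_of_set (w ` up Q u)" unfolding blk_def map_map
    by (simp add: map_idI)
  have "distinct (map w (blk Q u))" unfolding mw by simp
  then show "distinct (blk Q u)" by (simp add: distinct_map)
qed

lemma blk_in_LB:
  assumes Q: "Q \<subseteq> P" and u: "u \<in> Q"
  shows "blk Q u \<in> LB Q"
proof -
  have uP: "up Q u \<subseteq> P" using Q unfolding up_def by auto
  have fu: "finite (w ` up Q u)" using finite_subset[OF uP finP] by simp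
  have sb: "set (blk Q u) = up Q u" and mw: "map w (blk Q u) = sorted_list_of_set (w ` up Q u)"
    and db: "distinct (blk Q u)" using blk_props[OF Q] by auto
  have ss: "sorted_wrt (<) (map w (blk Q u))" unfolding mw by simp
  have uu: "u \<in> up Q u" unfolding up_def using u Q prefl by auto
  have upc: "upc le Q (set (blk Q u))"
    unfolding upc_def sb
  proof (intro conjI ballI notI)
    show "up Q u \<subseteq> Q" unfolding up_def by auto
    fix p q assume p: "p \<in> up Q u" and q: "q \<in> Q - up Q u" and pq: "plt le p q"
    have "le u q" using ptrans[of u p q] p q pq Q u unfolding up_def plt_def by auto
    then show False using q unfolding up_def by auto
  qed
  have ne: "blk Q u \<noteq> []" using sb uu by auto
  have um: "unimod (map w (blk Q u))" unfolding unimod_def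
  proof (rule exI[of _ 0], intro conjI allI impI)
    show "0 < length (map w (blk Q u))" using ne by simp
    fix j assume "0 \<le> j \<and> Suc j < length (map w (blk Q u))"
    then show "map w (blk Q u) ! j < map w (blk Q u) ! Suc j"
      using sorted_wrt_nth_less[OF ss, of j "Suc j"] by simp
  qed simp
  have umin: "unique_minimal le (up Q u)" unfolding unique_minimal_def
  proof (rule ex1I[of _ u])
    show "u \<in> up Q u \<and> \<not> (\<exists>q\<in>up Q u. plt le q u)"
    proof (intro conjI uu notI)
      assume "\<exists>q\<in>up Q u. plt le q u"
      then obtain q where q: "q \<in> up Q u" "plt le q u" by blast
      then have "q = u" using pantisym[of q u] Q u unfolding up_def plt_def by auto
      then show False using q plt_irrefl by simp
    qed
  next
    fix m assume m: "m \<in> up Q u \<and> \<not> (\<exists>q\<in>up Q u. plt le q m)"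
    show "m = u"
    proof (rule ccontr)
      assume "m \<noteq> u"
      then have "plt le u m" using m unfolding up_def plt_def by auto
      then show False using m uu by blast
    qed
  qed
  have sR: "sorted_wrt (Rl le) (blk Q u)"
  proof -
    have "sorted_wrt (\<lambda>a b. w a < w b) (blk Q u)" using ss by (simp add: sorted_wrt_map)
    then show ?thesis
    proof (rule sorted_wrt_mono_rel[rotated])
      fix a b assume ab: "a \<in> set (blk Q u)" "b \<in> set (blk Q u)" "w a < w b"
      show "Rl le a b" unfolding Rl_def
      proof
        assume "plt le b a"
        then have "w b < w a" using plt_w[of b a] ab sb uP by auto
        then show False using ab by simp
      qed
    qed
  qed
  show ?thesis unfolding LB_def good_single goodb_def using upc ne um umin sb db sR by simp
qed

lemma LB_is_blk:
  assumes Q: "Q \<subseteq> P" and b: "b \<in> LB Q"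
  shows "\<exists>u\<in>Q. b = blk Q u"
proof -
  have upc: "upc le Q (set b)" and gb: "goodb le w b" and db: "distinct b" and sR: "sorted_wrt (Rl le) b"
    using b unfolding LB_def good_single by auto
  have bQ: "set b \<subseteq> Q" using upc unfolding upc_def by auto
  have bP: "set b \<subseteq> P" using bQ Q by auto
  have ne: "b \<noteq> []" and um: "unimod (map w b)" and umin: "unique_minimal le (set b)"
    using gb unfolding goodb_def by auto
  obtain m where m: "m \<in> set b" "\<not> (\<exists>q\<in>set b. plt le q m)"
    and muniq: "\<And>m'. m' \<in> set b \<Longrightarrow> \<not> (\<exists>q\<in>set b. plt le q m') \<Longrightarrow> m' = m"
    using umin unfolding unique_minimal_def by blast
  have mQ: "m \<in> Q" using m bQ by auto
  have Ub: "set b = up Q m"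
  proof (intro equalityI subsetI)
    fix y assume y: "y \<in> set b"
    obtain z where z: "z \<in> set b" "le z y" "\<forall>q\<in>set b. \<not> plt le q z" using min_below[OF bP y] by blast
    have "z = m" using muniq z by blast
    then show "y \<in> up Q m" using z y bQ unfolding up_def by auto
  next
    fix y assume y: "y \<in> up Q m"
    show "y \<in> set b"
    proof (cases "y = m")
      case True then show ?thesis using m by simp
    next
      case False
      then have "plt le m y" using y unfolding up_def plt_def by auto
      then show ?thesis using upc m y unfolding upc_def up_def by blast
    qed
  qed
  obtain c cs where bc: "b = c # cs" using ne by (cases b) auto
  have "c = m"
  proof (rule muniq)
    show "c \<in> set b" using bc by simp
    show "\<not> (\<exists>q\<in>set b. plt le q c)"
    proof
      assume "\<exists>q\<in>set b. plt le q c"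
      then obtain q where q: "q \<in> set b" "plt le q c" by blast
      have "q \<noteq> c" using q(2) plt_irrefl by auto
      then have "q \<in> set cs" using q(1) bc by simp
      then have "Rl le c q" using sR bc by simp
      then show False using q(2) unfolding Rl_def by simp
    qed
  qed
  have wm: "\<And>y. y \<in> set b \<Longrightarrow> y \<noteq> m \<Longrightarrow> w m < w y"
  proof -
    fix y assume y: "y \<in> set b" "y \<noteq> m"
    then have "plt le m y" using Ub unfolding up_def plt_def by auto
    then show "w m < w y" using plt_w[of m y] y m bP by auto
  qed
  obtain k where k: "k < length b" "\<forall>j<k. map w b ! j > map w b ! Suc j"
    "\<forall>j. k \<le> j \<and> Suc j < length b \<longrightarrow> map w b ! j < map w b ! Suc j"
    using um unfolding unimod_def by auto
  have k0: "k = 0"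
  proof (rule ccontr)
    assume "k \<noteq> 0"
    then have "map w b ! 0 > map w b ! Suc 0" using k(2) by auto
    moreover have "1 < length b" using k \<open>k \<noteq> 0\<close> by simp
    moreover have "b ! Suc 0 \<noteq> m"
    proof -
      have "cs \<noteq> []" using \<open>1 < length b\<close> bc by auto
      then have "b ! Suc 0 \<in> set cs" using bc by (cases cs) auto
      moreover have "c \<notin> set cs" using db bc by simp
      ultimately show ?thesis using \<open>c = m\<close> by auto
    qed
    moreover have "b ! Suc 0 \<in> set b" using \<open>1 < length b\<close> by simp
    ultimately show False using wm[of "b ! Suc 0"] bc \<open>c = m\<close> by simp
  qed
  have ssb: "sorted_wrt (<) (map w b)"
    using k(3) k0 by (subst sorted_wrt_iff_nth_Suc_transp) (auto simp: transp_def)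
  have "map w b = sorted_list_of_set (w ` up Q m)"
  proof (rule strict_sorted_equal)
    show "sorted_wrt (<) (sorted_list_of_set (w ` up Q m))" by simp
    show "sorted_wrt (<) (map w b)" by (rule ssb)
    have "finite (w ` up Q m)" using finite_subset[OF bP finP] Ub by simp
    then show "set (map w b) = set (sorted_list_of_set (w ` up Q m))" using Ub by simp
  qed
  then have "map w b = map w (blk Q m)" using blk_props(2)[OF Q] by simp
  moreover have "inj_on w (set b \<union> set (blk Q m))"
  proof -
    have "set b \<union> set (blk Q m) \<subseteq> P" using bP Ub blk_props(1)[OF Q] by simp
    then show ?thesis by (rule inj_on_subset[OF winj])
  qed
  ultimately have "b = blk Q m" using map_inj_on by blast
  then show ?thesis using mQ by blast
qed

lemma card_LB: assumes Q: "Q \<subseteq> P" shows "card (LB Q) = card Q"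
proof -
  have "bij_betw (blk Q) Q (LB Q)"
  proof (rule bij_betw_imageI)
    show "inj_on (blk Q) Q"
    proof (rule inj_onI)
      fix u v assume u: "u \<in> Q" and v: "v \<in> Q" and e: "blk Q u = blk Q v"
      have "up Q u = up Q v" using e blk_props(1)[OF Q] by metis
      then have "u \<in> up Q v" "v \<in> up Q u" using u v Q prefl unfolding up_def by auto
      then show "u = v" using pantisym[of u v] u v Q unfolding up_def by auto
    qed
    show "blk Q ` Q = LB Q" using blk_in_LB[OF Q] LB_is_blk[OF Q] by blast
  qed
  then show ?thesis by (metis bij_betw_same_card)
qed

end


lemma pi1_snoc: "pi1 (\<alpha> @ [a]) = pi1 \<alpha> * sum_list (\<alpha> @ [a])"
proof -
  have "pi1 (\<alpha> @ [a]) = (\<Prod>i = 1..length \<alpha>. sum_list (take i (\<alpha> @ [a]))) * sum_list (\<alpha> @ [a])"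
    unfolding pi1_def by simp
  also have "(\<Prod>i = 1..length \<alpha>. sum_list (take i (\<alpha> @ [a]))) = pi1 \<alpha>"
    unfolding pi1_def by (rule prod.cong) auto
  finally show ?thesis .
qed

context psetup begin

lemma G_snoc: assumes "Q \<noteq> {}"
  shows "G le w Q = (\<lambda>(b,bl1). bl1 @ [b]) ` (SIGMA b:LB Q. G le w (Q - set b))"
proof (intro equalityI subsetI)
  fix bl assume "bl \<in> G le w Q"
  then have g: "good le w Q bl" unfolding G_def by simp
  then have "bl \<noteq> []" using assms good_Nil by metis
  then obtain bl1 b where bl: "bl = bl1 @ [b]" by (cases bl rule: rev_exhaust) auto
  have "upc le Q (set b) \<and> good le w (set b) [b] \<and> good le w (Q - set b) bl1"
    using g unfolding bl good_append by simp
  then show "bl \<in> (\<lambda>(b,bl1). bl1 @ [b]) ` (SIGMA b:LB Q. G le w (Q - set b))"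
    unfolding LB_def G_def bl by auto
next
  fix bl assume "bl \<in> (\<lambda>(b,bl1). bl1 @ [b]) ` (SIGMA b:LB Q. G le w (Q - set b))"
  then obtain b bl1 where bl: "bl = bl1 @ [b]" and b: "b \<in> LB Q" and bl1: "bl1 \<in> G le w (Q - set b)" by auto
  have "good le w Q (bl1 @ [b])" unfolding good_append using b bl1 unfolding LB_def G_def by simp
  then show "bl \<in> G le w Q" unfolding G_def bl by simp
qed

lemma KL: "Q \<subseteq> P \<Longrightarrow> (\<Sum>bl\<in>G le w Q. 1 / real (pi1 (map length bl))) = 1"
proof (induction "card Q" arbitrary: Q rule: less_induct)
  case less
  have fQ: "finite Q" using less.prems finite_subset finP by blast
  show ?case
  proof (cases "Q = {}")
    case True
    have "G le w Q = {[]}" unfolding G_def True using good_empty by blast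
    then show ?thesis by (simp add: pi1_def)
  next
    case False
    let ?F = "\<lambda>bl. 1 / real (pi1 (map length bl))"
    let ?h = "\<lambda>(b,bl1). bl1 @ [b]"
    let ?S = "SIGMA b:LB Q. G le w (Q - set b)"
    have inj: "inj_on ?h ?S" by (rule inj_onI) auto
    have "(\<Sum>bl\<in>G le w Q. ?F bl) = (\<Sum>p\<in>?S. ?F (?h p))"
      unfolding G_snoc[OF False] by (rule sum.reindex_cong[OF inj refl refl])
    also have "\<dots> = (\<Sum>(b,bl1)\<in>?S. ?F (bl1 @ [b]))" by (rule sum.cong) auto
    also have "\<dots> = (\<Sum>b\<in>LB Q. \<Sum>bl1\<in>G le w (Q - set b). ?F (bl1 @ [b]))"
    proof (rule sum.Sigma[symmetric])
      have "LB Q \<subseteq> {b. set b \<subseteq> Q \<and> length b \<le> card Q}"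
      proof
        fix b assume "b \<in> LB Q"
        then have "upc le Q (set b)" "distinct b" unfolding LB_def good_single by auto
        then show "b \<in> {b. set b \<subseteq> Q \<and> length b \<le> card Q}"
          unfolding upc_def using card_mono[OF fQ] distinct_card by fastforce
      qed
      then show "finite (LB Q)" using finite_subset finite_lists_length_le[OF fQ] by blast
      show "\<forall>b\<in>LB Q. finite (G le w (Q - set b))" using fQ finite_G by blast
    qed
    also have "\<dots> = (\<Sum>b\<in>LB Q. 1 / real (card Q))"
    proof (rule sum.cong[OF refl])
      fix b assume b: "b \<in> LB Q"
      have bQ: "set b \<subseteq> Q" and bne: "b \<noteq> []" using b unfolding LB_def upc_def good_single goodb_def by auto
      have lt: "card (Q - set b) < card Q"
      proof -
        obtain y where "y \<in> set b" using bne by (cases b) auto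
        then have "Q - set b \<subset> Q" using bQ by auto
        then show ?thesis using fQ by (rule psubset_card_mono[rotated])
      qed
      have IH: "(\<Sum>bl\<in>G le w (Q - set b). ?F bl) = 1"
        using less.hyps[OF lt] less.prems by blast
      have "(\<Sum>bl1\<in>G le w (Q - set b). ?F (bl1 @ [b])) = (\<Sum>bl1\<in>G le w (Q - set b). 1 / real (card Q) * ?F bl1)"
      proof (rule sum.cong[OF refl])
        fix bl1 assume "bl1 \<in> G le w (Q - set b)"
        then have "bl1 @ [b] \<in> G le w Q" unfolding G_snoc[OF False] using b by force
        then have "sum_list (map length (bl1 @ [b])) = card Q" unfolding G_def using good_card by blast
        then have "pi1 (map length (bl1 @ [b])) = pi1 (map length bl1) * card Q"
          using pi1_snoc[of "map length bl1" "length b"] by simp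
        then show "?F (bl1 @ [b]) = 1 / real (card Q) * ?F bl1" by simp
      qed
      also have "\<dots> = 1 / real (card Q) * (\<Sum>bl\<in>G le w (Q - set b). ?F bl)"
        by (rule sum_distrib_left[symmetric])
      also have "\<dots> = 1 / real (card Q)" unfolding IH by simp
      finally show "(\<Sum>bl1\<in>G le w (Q - set b). ?F (bl1 @ [b])) = 1 / real (card Q)" .
    qed
    also have "\<dots> = 1" using card_LB[OF less.prems] False fQ by simp
    finally show ?thesis .
  qed
qed

end


context psetup begin

lemma split_sum:
  fixes F :: "'a list list \<Rightarrow> 'a list list \<Rightarrow> real"
  assumes fQ: "finite Q"
  shows "(\<Sum>bl\<in>G le w Q. \<Sum>m<length bl. F (take m bl) (drop m bl)) =
         (\<Sum>U\<in>Ups le Q - {{}}. \<Sum>bl2\<in>G le w U. \<Sum>bl1\<in>G le w (Q - U). F bl1 bl2)"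
proof -
  define S where "S = {(bl1, bl2). bl1 @ bl2 \<in> G le w Q \<and> bl2 \<noteq> []}"
  let ?t = "\<lambda>(bl, m). (take m bl, drop m bl)"
  let ?A = "SIGMA bl:G le w Q. {..<length bl}"
  have injt: "inj_on ?t ?A"
  proof (rule inj_onI)
    fix a b assume a: "a \<in> ?A" and b: "b \<in> ?A" and e: "?t a = ?t b"
    obtain bl m where a': "a = (bl, m)" by (cases a)
    obtain bl' m' where b': "b = (bl', m')" by (cases b)
    have e': "take m bl = take m' bl'" "drop m bl = drop m' bl'" using e a' b' by auto
    have "bl = bl'" using e' by (metis append_take_drop_id)
    moreover have "m = m'"
    proof -
      have "m < length bl" "m' < length bl'" using a b a' b' by auto
      then have "length (take m bl) = m" "length (take m' bl') = m'" by auto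
      then show ?thesis using e'(1) by metis
    qed
    ultimately show "a = b" using a' b' by simp
  qed
  have imgt: "?t ` ?A = S"
  proof (intro equalityI subsetI)
    fix p assume "p \<in> ?t ` ?A"
    then obtain bl m where "bl \<in> G le w Q" "m < length bl" "p = (take m bl, drop m bl)" by auto
    then show "p \<in> S" unfolding S_def by auto
  next
    fix p assume "p \<in> S"
    then obtain bl1 bl2 where p: "p = (bl1, bl2)" "bl1 @ bl2 \<in> G le w Q" "bl2 \<noteq> []" unfolding S_def by auto
    then have m: "(bl1 @ bl2, length bl1) \<in> ?A" by auto
    have "p = ?t (bl1 @ bl2, length bl1)" using p by simp
    from this m show "p \<in> ?t ` ?A" by (rule image_eqI)
  qed
  let ?r = "\<lambda>(U, bl2, bl1). (bl1, bl2)"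
  let ?B = "SIGMA U:Ups le Q - {{}}. G le w U \<times> G le w (Q - U)"
  have injr: "inj_on ?r ?B"
  proof (rule inj_onI)
    fix a b assume a: "a \<in> ?B" and b: "b \<in> ?B" and e: "?r a = ?r b"
    obtain U bl2 bl1 where a': "a = (U, bl2, bl1)" by (cases a) auto
    obtain U' bl2' bl1' where b': "b = (U', bl2', bl1')" by (cases b) auto
    have "bl1 = bl1'" "bl2 = bl2'" using e a' b' by auto
    moreover have "U = set (concat bl2)" "U' = set (concat bl2')" using a b a' b' unfolding G_def good_def by auto
    ultimately show "a = b" using a' b' by simp
  qed
  have imgr: "?r ` ?B = S"
  proof (intro equalityI subsetI)
    fix p assume "p \<in> ?r ` ?B"
    then obtain U bl2 bl1 where u: "U \<in> Ups le Q" "U \<noteq> {}" "good le w U bl2" "good le w (Q - U) bl1" and p: "p = (bl1, bl2)"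
      unfolding G_def by auto
    have U: "U = set (concat bl2)" using u(3) unfolding good_def by simp
    have "good le w Q (bl1 @ bl2)" unfolding good_append using u U unfolding Ups_def by simp
    moreover have "bl2 \<noteq> []" using u(2,3) good_Nil by metis
    ultimately show "p \<in> S" unfolding S_def G_def p by simp
  next
    fix p assume "p \<in> S"
    then obtain bl1 bl2 where p: "p = (bl1, bl2)" "good le w Q (bl1 @ bl2)" "bl2 \<noteq> []" unfolding S_def G_def by auto
    let ?U = "set (concat bl2)"
    have g: "upc le Q ?U" "good le w ?U bl2" "good le w (Q - ?U) bl1" using p(2) unfolding good_append by auto
    have "?U \<noteq> {}" using g(2) p(3) good_empty by metis
    then have m: "(?U, bl2, bl1) \<in> ?B" using g unfolding Ups_def G_def by auto
    have "p = ?r (?U, bl2, bl1)" using p by simp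
    from this m show "p \<in> ?r ` ?B" by (rule image_eqI)
  qed
  have fA: "finite ?A" using finite_G[OF fQ] by auto
  have "(\<Sum>bl\<in>G le w Q. \<Sum>m<length bl. F (take m bl) (drop m bl)) = (\<Sum>(bl,m)\<in>?A. F (take m bl) (drop m bl))"
    by (rule sum.Sigma) (auto simp: finite_G[OF fQ])
  also have "\<dots> = (\<Sum>q\<in>?A. (\<lambda>(bl1, bl2). F bl1 bl2) (?t q))" by (rule sum.cong) auto
  also have "\<dots> = (\<Sum>p\<in>S. (\<lambda>(bl1, bl2). F bl1 bl2) p)"
    unfolding imgt[symmetric] by (rule sum.reindex[OF injt, symmetric, unfolded comp_def])
  also have "\<dots> = (\<Sum>q\<in>?B. (\<lambda>(bl1, bl2). F bl1 bl2) (?r q))"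
    unfolding imgr[symmetric] by (rule sum.reindex[OF injr, unfolded comp_def])
  also have "\<dots> = (\<Sum>(U,bb)\<in>?B. F (snd bb) (fst bb))" by (rule sum.cong) auto
  also have "\<dots> = (\<Sum>U\<in>Ups le Q - {{}}. \<Sum>bb\<in>G le w U \<times> G le w (Q - U). F (snd bb) (fst bb))"
  proof (rule sum.Sigma[symmetric])
    show "finite (Ups le Q - {{}})" using finite_Ups[OF fQ] by simp
    show "\<forall>U\<in>Ups le Q - {{}}. finite (G le w U \<times> G le w (Q - U))"
    proof
      fix U assume "U \<in> Ups le Q - {{}}"
      then have "U \<subseteq> Q" unfolding Ups_def upc_def by auto
      then have "finite U" using fQ finite_subset by blast
      then show "finite (G le w U \<times> G le w (Q - U))" using finite_G fQ by blast
    qed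
  qed
  also have "\<dots> = (\<Sum>U\<in>Ups le Q - {{}}. \<Sum>bl2\<in>G le w U. \<Sum>bl1\<in>G le w (Q - U). F bl1 bl2)"
    by (rule sum.cong[OF refl]) (simp add: sum.cartesian_product split_beta)
  finally show ?thesis .
qed

lemma main: "Q \<subseteq> P \<Longrightarrow> KP Q le N x = (\<Sum>bl\<in>G le w Q. V N x (map length bl))"
proof (induction N arbitrary: Q)
  case 0
  have fQ: "finite Q" using 0 finite_subset finP by blast
  have "(\<Sum>bl\<in>G le w Q. V 0 x (map length bl)) = (\<Sum>bl\<in>G le w Q. if bl = [] then 1 else 0)"
  proof (rule sum.cong[OF refl])
    fix bl assume "bl \<in> G le w Q"
    then have "pos (map length bl)" using good_pos unfolding G_def by blast
    then show "V 0 x (map length bl) = (if bl = [] then 1 else 0)" using V_0 by simp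
  qed
  also have "\<dots> = (if [] \<in> G le w Q then 1 else 0)" by (rule sum.delta[OF finite_G[OF fQ]])
  also have "\<dots> = (if Q = {} then 1 else 0)" unfolding G_def by (simp add: good_Nil)
  finally show ?case using KP_0[OF fQ] by simp
next
  case (Suc N)
  have fQ: "finite Q" using Suc.prems finite_subset finP by blast
  define F :: "'a list list \<Rightarrow> 'a list list \<Rightarrow> real" where "F = (\<lambda>bl1 bl2. x (Suc N) ^ length (concat bl2) / real (pi1 (map length bl2)) * V N x (map length bl1))"
  have "(\<Sum>bl\<in>G le w Q. V (Suc N) x (map length bl)) =
     (\<Sum>bl\<in>G le w Q. V N x (map length bl) + (\<Sum>m<length bl. F (take m bl) (drop m bl)))"
  proof (rule sum.cong[OF refl])
    fix bl assume "bl \<in> G le w Q"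
    then have "pos (map length bl)" using good_pos unfolding G_def by blast
    then show "V (Suc N) x (map length bl) = V N x (map length bl) + (\<Sum>m<length bl. F (take m bl) (drop m bl))"
      using V_Suc[OF \<open>pos (map length bl)\<close>, of N x] unfolding F_def by (simp add: drop_map take_map length_concat)
  qed
  also have "\<dots> = KP Q le N x + (\<Sum>bl\<in>G le w Q. \<Sum>m<length bl. F (take m bl) (drop m bl))"
    using Suc.IH[OF Suc.prems] by (simp add: sum.distrib)
  also have "(\<Sum>bl\<in>G le w Q. \<Sum>m<length bl. F (take m bl) (drop m bl)) =
      (\<Sum>U\<in>Ups le Q - {{}}. \<Sum>bl2\<in>G le w U. \<Sum>bl1\<in>G le w (Q - U). F bl1 bl2)"
    by (rule split_sum[OF fQ])
  also have "\<dots> = (\<Sum>U\<in>Ups le Q - {{}}. x (Suc N) ^ card U * KP (Q - U) le N x)"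
  proof (rule sum.cong[OF refl])
    fix U assume "U \<in> Ups le Q - {{}}"
    then have UQ: "U \<subseteq> Q" unfolding Ups_def upc_def by auto
    have "(\<Sum>bl2\<in>G le w U. \<Sum>bl1\<in>G le w (Q - U). F bl1 bl2) =
        (\<Sum>bl2\<in>G le w U. x (Suc N) ^ card U * (1 / real (pi1 (map length bl2))) * (\<Sum>bl1\<in>G le w (Q - U). V N x (map length bl1)))"
    proof (rule sum.cong[OF refl])
      fix bl2 assume "bl2 \<in> G le w U"
      then have "good le w U bl2" unfolding G_def by simp
      then have "length (concat bl2) = card U" using good_card by (simp add: length_concat)
      then show "(\<Sum>bl1\<in>G le w (Q - U). F bl1 bl2) = x (Suc N) ^ card U * (1 / real (pi1 (map length bl2))) * (\<Sum>bl1\<in>G le w (Q - U). V N x (map length bl1))"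
        unfolding F_def by (simp add: sum_distrib_left)
    qed
    also have "\<dots> = x (Suc N) ^ card U * (\<Sum>bl2\<in>G le w U. 1 / real (pi1 (map length bl2))) * (\<Sum>bl1\<in>G le w (Q - U). V N x (map length bl1))"
    proof -
      let ?c = "x (Suc N) ^ card U" and ?S = "(\<Sum>bl1\<in>G le w (Q - U). V N x (map length bl1))"
      have "(\<Sum>bl2\<in>G le w U. ?c * (1 / real (pi1 (map length bl2))) * ?S) =
          (\<Sum>bl2\<in>G le w U. (1 / real (pi1 (map length bl2))) * (?c * ?S))"
        by (rule sum.cong) simp_all
      also have "\<dots> = (\<Sum>bl2\<in>G le w U. 1 / real (pi1 (map length bl2))) * (?c * ?S)"
        by (rule sum_distrib_right[symmetric])
      finally show ?thesis by simp
    qed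
    also have "\<dots> = x (Suc N) ^ card U * KP (Q - U) le N x"
    proof -
      have "U \<subseteq> P" "Q - U \<subseteq> P" using UQ Suc.prems by auto
      then have "(\<Sum>bl\<in>G le w U. 1 / real (pi1 (map length bl))) = 1"
        "KP (Q - U) le N x = (\<Sum>bl\<in>G le w (Q - U). V N x (map length bl))"
        using KL Suc.IH by blast+
      then show ?thesis by simp
    qed
    finally show "(\<Sum>bl2\<in>G le w U. \<Sum>bl1\<in>G le w (Q - U). F bl1 bl2) = x (Suc N) ^ card U * KP (Q - U) le N x" .
  qed
  also have "KP Q le N x + (\<Sum>U\<in>Ups le Q - {{}}. x (Suc N) ^ card U * KP (Q - U) le N x) = KP Q le (Suc N) x"
    unfolding KP_Suc[OF fQ] using sum.remove[OF finite_Ups[OF fQ] empty_Ups, of "\<lambda>U. x (Suc N) ^ card U * KP (Q - U) le N x" le]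
    by simp
  finally show ?case ..
qed

end


fun chop :: "nat list \<Rightarrow> 'a list \<Rightarrow> 'a list list" where
  "chop [] xs = []"
| "chop (a # \<alpha>) xs = take a xs # chop \<alpha> (drop a xs)"

lemma length_chop[simp]: "length (chop \<alpha> xs) = length \<alpha>"
  by (induction \<alpha> arbitrary: xs) auto

lemma concat_chop: "sum_list \<alpha> = length xs \<Longrightarrow> concat (chop \<alpha> xs) = xs"
  by (induction \<alpha> arbitrary: xs) auto

lemma map_length_chop: "sum_list \<alpha> = length xs \<Longrightarrow> map length (chop \<alpha> xs) = \<alpha>"
  by (induction \<alpha> arbitrary: xs) (auto simp: min_def)

lemma chop_concat: "map length bl = \<alpha> \<Longrightarrow> chop \<alpha> (concat bl) = bl"
  by (induction bl arbitrary: \<alpha>) auto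

lemma nth_chop: "i < length \<alpha> \<Longrightarrow> chop \<alpha> xs ! i = take (\<alpha> ! i) (drop (sum_list (take i \<alpha>)) xs)"
proof (induction \<alpha> arbitrary: xs i)
  case Nil then show ?case by simp
next
  case (Cons a \<alpha>)
  show ?case
  proof (cases i)
    case 0 then show ?thesis by simp
  next
    case (Suc j)
    then have "j < length \<alpha>" using Cons.prems by simp
    then show ?thesis using Cons.IH[of j "drop a xs"] Suc by (simp add: add.commute)
  qed
qed

lemma unimod_shift:
  assumes len: "length ys = L" and ys: "\<And>t. t < L \<Longrightarrow> ys ! t = g (s + 1 + t)"
  shows "unimodal_on g {s+1..s+L} \<longleftrightarrow> unimod ys"
proof
  assume "unimodal_on g {s+1..s+L}"
  then obtain k where k: "k \<in> {s+1..s+L}" "\<forall>j. j \<in> {s+1..s+L} \<and> j < k \<longrightarrow> g j > g (Suc j)"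
    "\<forall>j. j \<in> {s+1..s+L} \<and> Suc j \<in> {s+1..s+L} \<and> k \<le> j \<longrightarrow> g j < g (Suc j)"
    unfolding unimodal_on_def by blast
  show "unimod ys" unfolding unimod_def
  proof (rule exI[of _ "k - (s+1)"], intro conjI allI impI)
    show "k - (s + 1) < length ys" using k(1) len by auto
    fix j assume j: "j < k - (s + 1)"
    have jj: "Suc j \<le> L" "Suc (s + j) < k" using j k(1) by auto
    have "g (s+1+j) > g (Suc (s+1+j))" using k(2)[rule_format, of "s+1+j"] jj by auto
    then show "ys ! j > ys ! Suc j" using ys[of j] ys[of "Suc j"] j k(1) by auto
  next
    fix j assume j: "k - (s + 1) \<le> j \<and> Suc j < length ys"
    have "g (s+1+j) < g (Suc (s+1+j))" using k(3)[rule_format, of "s+1+j"] j k(1) len by auto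
    then show "ys ! j < ys ! Suc j" using ys[of j] ys[of "Suc j"] j len by auto
  qed
next
  assume "unimod ys"
  then obtain k where k: "k < L" "\<forall>j<k. ys ! j > ys ! Suc j"
    "\<forall>j. k \<le> j \<and> Suc j < L \<longrightarrow> ys ! j < ys ! Suc j"
    unfolding unimod_def len by blast
  show "unimodal_on g {s+1..s+L}" unfolding unimodal_on_def
  proof (rule bexI[of _ "s+1+k"], intro conjI allI impI)
    show "s + 1 + k \<in> {s+1..s+L}" using k(1) by auto
    fix j assume j: "j \<in> {s+1..s+L} \<and> j < s + 1 + k"
    then obtain t where t: "j = s + 1 + t" "t < k" by (metis add_less_cancel_left atLeastAtMost_iff le_iff_add)
    have "ys ! t > ys ! Suc t" using k(2) t by auto
    then show "g j > g (Suc j)" using ys[of t] ys[of "Suc t"] t k(1) by auto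
  next
    fix j assume j: "j \<in> {s+1..s+L} \<and> Suc j \<in> {s+1..s+L} \<and> s + 1 + k \<le> j"
    then obtain t where t: "j = s + 1 + t" "k \<le> t" by (metis le_iff_add add.assoc add_le_cancel_left)
    have "Suc t < L" using j t by auto
    then have "ys ! t < ys ! Suc t" using k(3) t by auto
    then show "g j < g (Suc j)" using ys[of t] ys[of "Suc t"] t \<open>Suc t < L\<close> by auto
  qed
qed


locale bsetup = psetup +
  fixes n :: nat
  assumes wimg: "w ` P = {1..n}"
begin

definition ps :: "(nat \<Rightarrow> nat) \<Rightarrow> 'a list" where
  "ps \<sigma> = map (\<lambda>j. inv_into P w (\<sigma> j)) [1..<n+1]"

definition sg :: "'a list \<Rightarrow> nat \<Rightarrow> nat" where
  "sg xs = (\<lambda>j. if j \<in> {1..n} then w (xs ! (j - 1)) else j)"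

definition Lists :: "'a list set" where
  "Lists = {xs. distinct xs \<and> set xs = P}"

lemma cardP: "card P = n"
  using card_image[OF winj] wimg by simp

lemma L_len: "xs \<in> Lists \<Longrightarrow> length xs = n"
  unfolding Lists_def using cardP distinct_card by fastforce

lemma ps_Lists: assumes "\<sigma> permutes {1..n}" shows "ps \<sigma> \<in> Lists"
proof -
  have im: "\<sigma> ` {1..n} = {1..n}" using permutes_image[OF assms] .
  have inj\<sigma>: "inj_on \<sigma> {1..n}" using inj_on_subset[OF permutes_inj[OF assms] subset_UNIV] .
  have "ps \<sigma> = map (inv_into P w \<circ> \<sigma>) [1..<n+1]" unfolding ps_def by simp
  moreover have "inj_on (inv_into P w \<circ> \<sigma>) {1..<n+1}"
  proof (rule comp_inj_on)
    show "inj_on \<sigma> {1..<n+1}" using inj\<sigma> by (simp add: atLeastLessThanSuc_atLeastAtMost)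
    show "inj_on (inv_into P w) (\<sigma> ` {1..<n+1})"
      using inj_on_inv_into[of "\<sigma> ` {1..<n+1}" w P] im wimg by (simp add: atLeastLessThanSuc_atLeastAtMost)
  qed
  ultimately have "distinct (ps \<sigma>)" by (simp add: distinct_map del: upt_Suc)
  moreover have "set (ps \<sigma>) = P"
  proof -
    have "set (ps \<sigma>) = inv_into P w ` \<sigma> ` {1..n}" unfolding ps_def
      by (simp add: image_image atLeastLessThanSuc_atLeastAtMost del: upt_Suc)
    also have "\<dots> = inv_into P w ` w ` P" using im wimg by simp
    also have "\<dots> = P" using winj by simp
    finally show ?thesis .
  qed
  ultimately show ?thesis unfolding Lists_def by simp
qed

lemma sg_ps: assumes "\<sigma> permutes {1..n}" shows "sg (ps \<sigma>) = \<sigma>"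
proof
  fix j show "sg (ps \<sigma>) j = \<sigma> j"
  proof (cases "j \<in> {1..n}")
    case True
    then have "\<sigma> j \<in> w ` P" using permutes_in_image[OF assms] wimg by simp
    moreover have "ps \<sigma> ! (j - 1) = inv_into P w (\<sigma> j)"
    proof -
      have j1: "j - 1 < n" using True by auto
      then have "j - 1 < length [1..<n+1]" "[1..<n+1] ! (j - 1) = j" using True by (simp_all del: upt_Suc)
      then show ?thesis unfolding ps_def by (simp del: upt_Suc)
    qed
    ultimately show ?thesis unfolding sg_def using True by (simp add: f_inv_into_f)
  next
    case False
    then show ?thesis unfolding sg_def if_not_P[OF False] using permutes_not_in[OF assms False] by simp
  qed
qed

lemma sg_val: assumes "xs \<in> Lists" "t < n" shows "sg xs (Suc t) = w (xs ! t)"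
  unfolding sg_def using assms by simp

lemma sg_perm: assumes xs: "xs \<in> Lists" shows "sg xs permutes {1..n}"
proof (rule bij_imp_permutes)
  have len: "length xs = n" using L_len[OF xs] .
  have d: "distinct xs" and s: "set xs = P" using xs unfolding Lists_def by auto
  show "bij_betw (sg xs) {1..n} {1..n}" unfolding bij_betw_def
  proof
    show "inj_on (sg xs) {1..n}"
    proof (rule inj_onI)
      fix i j assume i: "i \<in> {1..n}" and j: "j \<in> {1..n}" and e: "sg xs i = sg xs j"
      have "w (xs ! (i-1)) = w (xs ! (j-1))" using e i j unfolding sg_def by simp
      moreover have "xs ! (i-1) \<in> P" "xs ! (j-1) \<in> P" using i j len s by auto
      ultimately have "xs ! (i-1) = xs ! (j-1)" using winj by (meson inj_onD)
      then have "i - 1 = j - 1" using d len i j nth_eq_iff_index_eq by fastforce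
      then show "i = j" using i j by auto
    qed
    show "sg xs ` {1..n} = {1..n}"
    proof -
      have "sg xs ` {1..n} = (\<lambda>t. w (xs ! t)) ` {..<n}"
      proof (intro equalityI subsetI)
        fix y assume "y \<in> sg xs ` {1..n}"
        then obtain j where "j \<in> {1..n}" "y = sg xs j" by auto
        then show "y \<in> (\<lambda>t. w (xs ! t)) ` {..<n}" unfolding sg_def by (intro image_eqI[of _ _ "j - 1"]) auto
      next
        fix y assume "y \<in> (\<lambda>t. w (xs ! t)) ` {..<n}"
        then obtain t where "t < n" "y = w (xs ! t)" by auto
        then show "y \<in> sg xs ` {1..n}" unfolding sg_def by (intro image_eqI[of _ _ "Suc t"]) auto
      qed
      also have "\<dots> = w ` set xs"
      proof -
        have "(\<lambda>t. w (xs ! t)) ` {..<n} = w ` ((!) xs ` {..<length xs})" using len by (simp add: image_image)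
        also have "(!) xs ` {..<length xs} = set xs" by (auto simp: in_set_conv_nth)
        finally show ?thesis .
      qed
      finally show ?thesis using s wimg by simp
    qed
  qed
  show "\<And>x. x \<notin> {1..n} \<Longrightarrow> sg xs x = x" unfolding sg_def by (simp only: if_False)
qed

lemma ps_sg: assumes xs: "xs \<in> Lists" shows "ps (sg xs) = xs"
proof (rule nth_equalityI)
  have len: "length xs = n" using L_len[OF xs] .
  show "length (ps (sg xs)) = length xs" unfolding ps_def len by (simp del: upt_Suc)
  fix t assume "t < length (ps (sg xs))"
  then have t: "t < n" unfolding ps_def by (simp del: upt_Suc)
  have "ps (sg xs) ! t = inv_into P w (sg xs (Suc t))" unfolding ps_def using t by (simp del: upt_Suc)
  also have "\<dots> = inv_into P w (w (xs ! t))" using sg_val[OF xs t] by simp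
  also have "\<dots> = xs ! t"
  proof -
    have "xs ! t \<in> P" using xs t len unfolding Lists_def by auto
    then show ?thesis by (rule inv_into_f_f[OF winj])
  qed
  finally show "ps (sg xs) ! t = xs ! t" .
qed

lemma inv_sg: assumes xs: "xs \<in> Lists" and t: "t < n" shows "inv (sg xs) (w (xs ! t)) = Suc t"
  using permutes_inverses(2)[OF sg_perm[OF xs], of "Suc t"] sg_val[OF xs t] by simp

lemma cond_a: assumes xs: "xs \<in> Lists"
  shows "sg xs \<in> linext P le w n \<longleftrightarrow> sorted_wrt (Rl le) xs"
proof -
  have len: "length xs = n" using L_len[OF xs] .
  have s: "set xs = P" and d: "distinct xs" using xs unfolding Lists_def by auto
  have "(\<forall>x\<in>P. \<forall>y\<in>P. plt le x y \<longrightarrow> inv (sg xs) (w x) < inv (sg xs) (w y)) \<longleftrightarrow>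
        (\<forall>i<n. \<forall>j<n. plt le (xs ! i) (xs ! j) \<longrightarrow> i < j)"
  proof
    assume H: "\<forall>x\<in>P. \<forall>y\<in>P. plt le x y \<longrightarrow> inv (sg xs) (w x) < inv (sg xs) (w y)"
    show "\<forall>i<n. \<forall>j<n. plt le (xs ! i) (xs ! j) \<longrightarrow> i < j"
    proof (intro allI impI)
      fix i j assume "i < n" "j < n" "plt le (xs ! i) (xs ! j)"
      moreover have "xs ! i \<in> P" "xs ! j \<in> P" using \<open>i < n\<close> \<open>j < n\<close> len s by auto
      ultimately show "i < j" using H inv_sg[OF xs] by fastforce
    qed
  next
    assume H: "\<forall>i<n. \<forall>j<n. plt le (xs ! i) (xs ! j) \<longrightarrow> i < j"
    show "\<forall>x\<in>P. \<forall>y\<in>P. plt le x y \<longrightarrow> inv (sg xs) (w x) < inv (sg xs) (w y)"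
    proof (intro ballI impI)
      fix x y assume "x \<in> P" "y \<in> P" "plt le x y"
      obtain i where i: "i < n" "x = xs ! i" using \<open>x \<in> P\<close> s len by (metis in_set_conv_nth)
      obtain j where j: "j < n" "y = xs ! j" using \<open>y \<in> P\<close> s len by (metis in_set_conv_nth)
      show "inv (sg xs) (w x) < inv (sg xs) (w y)" using H i j \<open>plt le x y\<close> inv_sg[OF xs] by simp
    qed
  qed
  also have "\<dots> \<longleftrightarrow> sorted_wrt (Rl le) xs"
  proof
    assume H: "\<forall>i<n. \<forall>j<n. plt le (xs ! i) (xs ! j) \<longrightarrow> i < j"
    show "sorted_wrt (Rl le) xs" unfolding sorted_wrt_iff_nth_less Rl_def
    proof (intro allI impI notI)
      fix i j assume "i < j" "j < length xs" "plt le (xs ! j) (xs ! i)"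
      then have "j < i" using H len by auto
      then show False using \<open>i < j\<close> by simp
    qed
  next
    assume H: "sorted_wrt (Rl le) xs"
    show "\<forall>i<n. \<forall>j<n. plt le (xs ! i) (xs ! j) \<longrightarrow> i < j"
    proof (intro allI impI)
      fix i j assume ij: "i < n" "j < n" "plt le (xs ! i) (xs ! j)"
      show "i < j"
      proof (rule ccontr)
        assume "\<not> i < j"
        moreover have "i \<noteq> j" using ij(3) plt_irrefl by auto
        ultimately have "j < i" by simp
        then show False using sorted_wrt_nth_less[OF H \<open>j < i\<close>] ij len unfolding Rl_def by simp
      qed
    qed
  qed
  finally show ?thesis unfolding linext_def using sg_perm[OF xs] by simp
qed

lemma block_Suc: "block \<alpha> (Suc i) = {sum_list (take i \<alpha>) + 1 .. sum_list (take i \<alpha>) + \<alpha> ! i}"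
  if "i < length \<alpha>" for \<alpha> :: "nat list"
  unfolding block_def using that by (simp add: take_Suc_conv_app_nth)

lemma chop_block:
  assumes xs: "xs \<in> Lists" and a: "sum_list \<alpha> = n" and i: "i < length \<alpha>"
  shows "length (chop \<alpha> xs ! i) = \<alpha> ! i"
    and "\<And>t. t < \<alpha> ! i \<Longrightarrow> map w (chop \<alpha> xs ! i) ! t = sg xs (sum_list (take i \<alpha>) + 1 + t)"
    and "sg xs ` block \<alpha> (Suc i) = w ` set (chop \<alpha> xs ! i)"
proof -
  let ?s = "sum_list (take i \<alpha>)" and ?L = "\<alpha> ! i"
  have len: "length xs = n" using L_len[OF xs] .
  have sL: "?s + ?L \<le> n"
  proof -
    have "?s + ?L = sum_list (take (Suc i) \<alpha>)" using i by (simp add: take_Suc_conv_app_nth)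
    then show ?thesis using psum_le_sum[of "Suc i" \<alpha>] a by simp
  qed
  have b: "chop \<alpha> xs ! i = take ?L (drop ?s xs)" using nth_chop[OF i] .
  show l: "length (chop \<alpha> xs ! i) = ?L" unfolding b using sL len by simp
  have bt: "\<And>t. t < ?L \<Longrightarrow> chop \<alpha> xs ! i ! t = xs ! (?s + t)" unfolding b using sL len by simp
  show m: "\<And>t. t < ?L \<Longrightarrow> map w (chop \<alpha> xs ! i) ! t = sg xs (?s + 1 + t)"
  proof -
    fix t assume t: "t < ?L"
    have "sg xs (?s + 1 + t) = w (xs ! (?s + t))" using sg_val[OF xs, of "?s + t"] t sL by simp
    then show "map w (chop \<alpha> xs ! i) ! t = sg xs (?s + 1 + t)" using bt[OF t] l t by simp
  qed
  show "sg xs ` block \<alpha> (Suc i) = w ` set (chop \<alpha> xs ! i)"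
  proof (intro equalityI subsetI)
    fix y assume "y \<in> sg xs ` block \<alpha> (Suc i)"
    then obtain j where j: "j \<in> {?s + 1 .. ?s + ?L}" "y = sg xs j" using block_Suc[OF i] by auto
    then obtain t where t: "j = ?s + 1 + t" "t < ?L" by (intro that[of "j - (?s + 1)"]) auto
    have "y = map w (chop \<alpha> xs ! i) ! t" using m[OF t(2)] j t by simp
    then show "y \<in> w ` set (chop \<alpha> xs ! i)" using t(2) l by auto
  next
    fix y assume "y \<in> w ` set (chop \<alpha> xs ! i)"
    then obtain t where t: "t < ?L" "y = w (chop \<alpha> xs ! i ! t)" using l by (auto simp: in_set_conv_nth)
    then have "y = sg xs (?s + 1 + t)" using m[OF t(1)] l by simp
    moreover have "?s + 1 + t \<in> block \<alpha> (Suc i)" using block_Suc[OF i] t by auto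
    ultimately show "y \<in> sg xs ` block \<alpha> (Suc i)" by blast
  qed
qed

end


lemma all_Suc_iff: "(\<forall>i\<in>{1..m}. Q i) \<longleftrightarrow> (\<forall>i<m. Q (Suc i))"
proof
  assume "\<forall>i\<in>{1..m}. Q i" then show "\<forall>i<m. Q (Suc i)" by auto
next
  assume H: "\<forall>i<m. Q (Suc i)"
  show "\<forall>i\<in>{1..m}. Q i"
  proof
    fix i assume "i \<in> {1..m}"
    then have "i = Suc (i - 1)" "i - 1 < m" by auto
    then show "Q i" using H by metis
  qed
qed

lemma all_set_chop: "(\<forall>b\<in>set (chop \<alpha> xs). Q b) \<longleftrightarrow> (\<forall>i<length \<alpha>. Q (chop \<alpha> xs ! i))"
  by (simp add: all_set_conv_all_nth)

context bsetup begin

lemma cond_b: assumes xs: "xs \<in> Lists" and a: "sum_list \<alpha> = n"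
  shows "alpha_unimodal \<alpha> (sg xs) \<longleftrightarrow> (\<forall>b\<in>set (chop \<alpha> xs). unimod (map w b))"
proof -
  have "alpha_unimodal \<alpha> (sg xs) \<longleftrightarrow> (\<forall>i<length \<alpha>. unimodal_on (sg xs) (block \<alpha> (Suc i)))"
    unfolding alpha_unimodal_def all_Suc_iff ..
  also have "\<dots> \<longleftrightarrow> (\<forall>i<length \<alpha>. unimod (map w (chop \<alpha> xs ! i)))"
  proof (intro all_cong imp_cong refl)
    fix i assume i: "i < length \<alpha>"
    show "unimodal_on (sg xs) (block \<alpha> (Suc i)) \<longleftrightarrow> unimod (map w (chop \<alpha> xs ! i))"
      unfolding block_Suc[OF i]
      by (rule unimod_shift) (use chop_block[OF xs a i] in auto)
  qed
  also have "\<dots> \<longleftrightarrow> (\<forall>b\<in>set (chop \<alpha> xs). unimod (map w b))" unfolding all_set_chop ..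
  finally show ?thesis .
qed

lemma cond_c: assumes xs: "xs \<in> Lists" and a: "sum_list \<alpha> = n"
  shows "(\<forall>i\<in>{1..length \<alpha>}. unique_minimal le (Pblock P w \<alpha> (sg xs) i)) \<longleftrightarrow>
         (\<forall>b\<in>set (chop \<alpha> xs). unique_minimal le (set b))"
proof -
  have "(\<forall>i\<in>{1..length \<alpha>}. unique_minimal le (Pblock P w \<alpha> (sg xs) i)) \<longleftrightarrow>
        (\<forall>i<length \<alpha>. unique_minimal le (Pblock P w \<alpha> (sg xs) (Suc i)))"
    unfolding all_Suc_iff ..
  also have "\<dots> \<longleftrightarrow> (\<forall>i<length \<alpha>. unique_minimal le (set (chop \<alpha> xs ! i)))"
  proof (intro all_cong imp_cong refl)
    fix i assume i: "i < length \<alpha>"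
    have sub: "set (chop \<alpha> xs ! i) \<subseteq> P"
    proof -
      have "set (chop \<alpha> xs ! i) \<subseteq> set xs" unfolding nth_chop[OF i] by (meson set_drop_subset set_take_subset subset_trans)
      then show ?thesis using xs unfolding Lists_def by simp
    qed
    have "Pblock P w \<alpha> (sg xs) (Suc i) = {p \<in> P. w p \<in> w ` set (chop \<alpha> xs ! i)}"
      unfolding Pblock_def chop_block(3)[OF xs a i] ..
    also have "\<dots> = set (chop \<alpha> xs ! i)"
    proof (intro equalityI subsetI)
      fix p assume "p \<in> {p \<in> P. w p \<in> w ` set (chop \<alpha> xs ! i)}"
      then obtain q where "p \<in> P" "q \<in> set (chop \<alpha> xs ! i)" "w p = w q" by auto
      moreover have "q \<in> P" using sub \<open>q \<in> set (chop \<alpha> xs ! i)\<close> by blast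
      ultimately have "p = q" using inj_onD[OF winj] by blast
      then show "p \<in> set (chop \<alpha> xs ! i)" using \<open>q \<in> set (chop \<alpha> xs ! i)\<close> by simp
    next
      fix p assume "p \<in> set (chop \<alpha> xs ! i)"
      then show "p \<in> {p \<in> P. w p \<in> w ` set (chop \<alpha> xs ! i)}" using sub by blast
    qed
    finally show "unique_minimal le (Pblock P w \<alpha> (sg xs) (Suc i)) \<longleftrightarrow> unique_minimal le (set (chop \<alpha> xs ! i))"
      by simp
  qed
  also have "\<dots> \<longleftrightarrow> (\<forall>b\<in>set (chop \<alpha> xs). unique_minimal le (set b))" unfolding all_set_chop ..
  finally show ?thesis .
qed

lemma bridge: assumes a: "\<alpha> \<in> compositions n"
  shows "card (Lstar P le w n \<alpha>) = card {bl \<in> G le w P. map length bl = \<alpha>}"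
proof -
  let ?A = "{bl \<in> G le w P. map length bl = \<alpha>}"
  let ?f = "\<lambda>bl. sg (concat bl)"
  have sa: "sum_list \<alpha> = n" and pa: "\<forall>a\<in>set \<alpha>. 0 < a" using a unfolding compositions_def composition_def by auto
  have inj: "inj_on ?f ?A"
  proof (rule inj_onI)
    fix bl1 bl2 assume b1: "bl1 \<in> ?A" and b2: "bl2 \<in> ?A" and e: "?f bl1 = ?f bl2"
    have g1: "good le w P bl1" "map length bl1 = \<alpha>" using b1 unfolding G_def by auto
    have g2: "good le w P bl2" "map length bl2 = \<alpha>" using b2 unfolding G_def by auto
    have l1: "concat bl1 \<in> Lists" using g1(1) unfolding good_def Lists_def by blast
    have l2: "concat bl2 \<in> Lists" using g2(1) unfolding good_def Lists_def by blast
    have "concat bl1 = ps (sg (concat bl1))" using ps_sg[OF l1] by simp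
    also have "\<dots> = ps (sg (concat bl2))" using e by simp
    also have "\<dots> = concat bl2" using ps_sg[OF l2] .
    finally have cc: "concat bl1 = concat bl2" .
    have "bl1 = chop \<alpha> (concat bl1)" using chop_concat[OF g1(2)] by simp
    also have "\<dots> = chop \<alpha> (concat bl2)" using cc by simp
    also have "\<dots> = bl2" using chop_concat[OF g2(2)] .
    finally show "bl1 = bl2" .
  qed
  have img: "?f ` ?A = Lstar P le w n \<alpha>"
  proof (intro equalityI subsetI)
    fix \<sigma> assume "\<sigma> \<in> ?f ` ?A"
    then obtain bl where bl: "bl \<in> ?A" and s: "\<sigma> = sg (concat bl)" by blast
    have g: "good le w P bl" and ml: "map length bl = \<alpha>" using bl unfolding G_def by auto
    let ?xs = "concat bl"
    have xs: "?xs \<in> Lists" using g unfolding good_def Lists_def by auto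
    have ch: "chop \<alpha> ?xs = bl" using chop_concat[OF ml] .
    have gd: "\<forall>b\<in>set bl. goodb le w b" "sorted_wrt (Rl le) ?xs" using g unfolding good_def by auto
    have gu: "\<forall>b\<in>set bl. unimod (map w b)" "\<forall>b\<in>set bl. unique_minimal le (set b)"
      using gd(1) unfolding goodb_def by auto
    have "sg ?xs \<in> linext P le w n" using cond_a[OF xs] gd(2) by blast
    moreover have "alpha_unimodal \<alpha> (sg ?xs)" using cond_b[OF xs sa, unfolded ch] gu(1) by blast
    moreover have "\<forall>i\<in>{1..length \<alpha>}. unique_minimal le (Pblock P w \<alpha> (sg ?xs) i)"
      using cond_c[OF xs sa, unfolded ch] gu(2) by blast
    ultimately have "sg ?xs \<in> Lstar P le w n \<alpha>" unfolding Lstar_def by blast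
    then show "\<sigma> \<in> Lstar P le w n \<alpha>" using s by simp
  next
    fix \<sigma> assume s: "\<sigma> \<in> Lstar P le w n \<alpha>"
    have perm: "\<sigma> permutes {1..n}" using s unfolding Lstar_def linext_def by simp
    let ?xs = "ps \<sigma>"
    have xs: "?xs \<in> Lists" using ps_Lists[OF perm] .
    have sx: "sg ?xs = \<sigma>" using sg_ps[OF perm] .
    let ?bl = "chop \<alpha> ?xs"
    have len: "sum_list \<alpha> = length ?xs" using L_len[OF xs] sa by simp
    have cc: "concat ?bl = ?xs" using concat_chop[OF len] .
    have ml: "map length ?bl = \<alpha>" using map_length_chop[OF len] .
    have lin: "sg ?xs \<in> linext P le w n" and au: "alpha_unimodal \<alpha> (sg ?xs)"
      and um: "\<forall>i\<in>{1..length \<alpha>}. unique_minimal le (Pblock P w \<alpha> (sg ?xs) i)"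
      using s sx unfolding Lstar_def by auto
    have ne: "\<forall>b\<in>set ?bl. b \<noteq> []"
    proof
      fix b assume "b \<in> set ?bl"
      then have "length b \<in> length ` set ?bl" by (rule imageI)
      then have "length b \<in> set \<alpha>" using ml by (simp only: set_map[symmetric])
      then show "b \<noteq> []" using pa by fastforce
    qed
    have u1: "\<forall>b\<in>set ?bl. unimod (map w b)" using cond_b[OF xs sa] au by blast
    have u2: "\<forall>b\<in>set ?bl. unique_minimal le (set b)" using cond_c[OF xs sa] um by blast
    have u3: "sorted_wrt (Rl le) ?xs" using cond_a[OF xs] lin by blast
    have u4: "distinct ?xs" "set ?xs = P" using xs unfolding Lists_def by auto
    have "\<forall>b\<in>set ?bl. goodb le w b" unfolding goodb_def using ne u1 u2 by blast
    then have "good le w P ?bl" unfolding good_def cc using u3 u4 by blast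
    then have "?bl \<in> ?A" using ml unfolding G_def by simp
    moreover have "\<sigma> = ?f ?bl" using cc sx by simp
    ultimately show "\<sigma> \<in> ?f ` ?A" by blast
  qed
  have "card (?f ` ?A) = card ?A" by (rule card_image[OF inj])
  then show ?thesis unfolding img .
qed

end


lemma finite_compositions: "finite (compositions n)"
proof -
  have "compositions n \<subseteq> {xs. set xs \<subseteq> {0..n} \<and> length xs \<le> n}"
  proof
    fix \<beta> assume "\<beta> \<in> compositions n"
    then have "sum_list \<beta> = n" "pos \<beta>" unfolding compositions_def composition_def pos_def by auto
    then show "\<beta> \<in> {xs. set xs \<subseteq> {0..n} \<and> length xs \<le> n}"
      using len_le_sum[of \<beta>] member_le_sum_list[of _ \<beta>] by auto
  qed
  moreover have "finite {xs. set xs \<subseteq> {0..n} \<and> length xs \<le> n}"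
    by (rule finite_lists_length_le) simp
  ultimately show ?thesis by (rule finite_subset)
qed

lemma zcoef_pos: assumes "\<forall>a\<in>set \<alpha>. 0 < a" shows "0 < zcoef \<alpha>"
  unfolding zcoef_def
proof (rule prod_pos)
  fix i assume "i \<in> set \<alpha>"
  then have "0 < i" using assms by blast
  then show "0 < i ^ count_list \<alpha> i * fact (count_list \<alpha> i)" by (simp add: fact_gt_zero)
qed

lemma Psi_V: assumes "\<forall>a\<in>set \<alpha>. 0 < a" shows "Psi N \<alpha> x / real (zcoef \<alpha>) = V N x \<alpha>"
proof -
  have "Psi N \<alpha> x = real (zcoef \<alpha>) * V N x \<alpha>" unfolding Psi_def V_def Co_def ..
  then show ?thesis using zcoef_pos[OF assms] by simp
qed

theorem theorem4p2:
  fixes P :: "'a set" and le :: "'a \<Rightarrow> 'a \<Rightarrow> bool" and w :: "'a \<Rightarrow> nat" and n :: nat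
  assumes "is_poset P le"
    and "card P = n"
    and "bij_betw w P {1..n}"
    and "naturally_labeled P le w"
  shows "\<forall>N (x :: nat \<Rightarrow> real).
           KP P le N x = (\<Sum>\<alpha> \<in> compositions n.
              Psi N \<alpha> x / real (zcoef \<alpha>) * real (card (Lstar P le w n \<alpha>)))"
proof (intro allI)
  fix N and x :: "nat \<Rightarrow> real"
  have winj: "inj_on w P" and wimg: "w ` P = {1..n}" using assms(3) unfolding bij_betw_def by auto
  interpret bsetup P le w n
    by unfold_locales (use assms(1,4) winj wimg in auto)
  have "KP P le N x = (\<Sum>bl\<in>G le w P. V N x (map length bl))" by (rule main) simp
  also have "\<dots> = (\<Sum>\<alpha>\<in>compositions n. \<Sum>bl\<in>{bl \<in> G le w P. map length bl = \<alpha>}. V N x (map length bl))"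
  proof (rule sum.group[symmetric])
    show "finite (G le w P)" by (rule finite_G[OF finP])
    show "finite (compositions n)" by (rule finite_compositions)
    show "map length ` G le w P \<subseteq> compositions n"
    proof
      fix \<alpha> assume "\<alpha> \<in> map length ` G le w P"
      then obtain bl where bl: "good le w P bl" "\<alpha> = map length bl" unfolding G_def by auto
      have "pos \<alpha>" using good_pos[OF bl(1)] bl(2) by simp
      moreover have "sum_list \<alpha> = n" using good_card[OF bl(1)] bl(2) cardP by simp
      ultimately show "\<alpha> \<in> compositions n" unfolding compositions_def composition_def pos_def by simp
    qed
  qed
  also have "\<dots> = (\<Sum>\<alpha>\<in>compositions n. Psi N \<alpha> x / real (zcoef \<alpha>) * real (card (Lstar P le w n \<alpha>)))"
  proof (rule sum.cong[OF refl])
    fix \<alpha> assume a: "\<alpha> \<in> compositions n"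
    then have pa: "\<forall>a\<in>set \<alpha>. 0 < a" unfolding compositions_def composition_def by simp
    have "(\<Sum>bl\<in>{bl \<in> G le w P. map length bl = \<alpha>}. V N x (map length bl)) =
          (\<Sum>bl\<in>{bl \<in> G le w P. map length bl = \<alpha>}. V N x \<alpha>)" by (rule sum.cong) auto
    also have "\<dots> = real (card {bl \<in> G le w P. map length bl = \<alpha>}) * V N x \<alpha>" by simp
    also have "\<dots> = Psi N \<alpha> x / real (zcoef \<alpha>) * real (card (Lstar P le w n \<alpha>))"
      using bridge[OF a] Psi_V[OF pa, of N x] by simp
    finally show "(\<Sum>bl\<in>{bl \<in> G le w P. map length bl = \<alpha>}. V N x (map length bl)) =
          Psi N \<alpha> x / real (zcoef \<alpha>) * real (card (Lstar P le w n \<alpha>))" .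
  qed
  finally show "KP P le N x = (\<Sum>\<alpha>\<in>compositions n. Psi N \<alpha> x / real (zcoef \<alpha>) * real (card (Lstar P le w n \<alpha>)))" .
qed


end
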